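(* Let $f:\mathbb{R}^n\times\mathbb{R}\to\mathbb{R}^n$ be $C^1$, let $\lambda_-<\lambda_+$ and let $\Lambda$ be a parameter shift from $\lambda_-$ to $\lambda_+$. For $r>0$ let $\Phi$ be the solution cocycle of $\dot x=f(x,\Lambda(rt))$, and for fixed $\lambda$ let $\phi_\lambda$ be the flow of $\dot x=f(x,\lambda)$. Suppose $\lambda\mapsto A(\lambda)$, $\lambda\in[\lambda_-,\lambda_+]$, is a branch of attractors that is uniformly stable, and set $A_\pm=A(\lambda_\pm)$. For $r>0$, $\eta>0$ and $t\in\mathbb{R}$ define the pullback attractor fibres $$A_t^{[\Lambda,r,A_-]}:=\bigcap_{\tau>0}\overline{\bigcup_{s\le-\tau}\Phi\big(t,s,\mathcal{N}_{\eta}(A_-)\big)},$$ with $\eta>0$ sufficiently small that this set does not depend on $\eta$. Then for all $\epsilon>0$ there exists $\delta>0$ such that $$d\big(A_t^{[\Lambda,r,A_-]},A(\Lambda(rt))\big)<\epsilon$$ for all $0<r<\delta$ and all $t\in\mathbb{R}$. Moreover, there is $\delta>0$ such that for all $0<r<\delta$ there is tracking, i.e. $A_{+\infty}^{[\Lambda,r,A_-]}\subset A_+$, where $A_{+\infty}^{[\Lambda,r,A_-]}=\bigcap_{\tau>0}\overline{\bigcup_{t\ge\tau}A_t^{[\Lambda,r,A_-]}}$.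
   Context: A parameter shift from $\lambda_-$ to $\lambda_+$ is a smooth $\Lambda:\mathbb{R}\to(\lambda_-,\lambda_+)$ with $\lim_{\tau\to\pm\infty}\Lambda(\tau)=\lambda_\pm$ and $\lim_{\tau\to\pm\infty}\Lambda'(\tau)=0$. Solutions are assumed to exist for all time; $\Phi(t,s,x_0)$ is the value at time $t$ of the solution with $x(s)=x_0$. For nonempty compact $X,Y\subset\mathbb{R}^n$, $d(X,Y)=\sup_{x\in X}\inf_{y\in Y}\|x-y\|$, $d_H(X,Y)=\max\{d(X,Y),d(Y,X)\}$, and $\mathcal{N}_\eta(M)=\{x:d(x,M)<\eta\}$. A connected compact $\phi_\lambda$-invariant set $M$ is an exponentially stable attractor if there are $\mu>0$, $\eta>0$, $C\ge1$ with $d(\phi_\lambda(t,x),M)\le Ce^{-\mu t}d(x,M)$ for all $x\in\mathcal{N}_\eta(M)$ and $t>0$. A branch of attractors is a map $\lambda\mapsto A(\lambda)$, continuous with respect to $d_H$, such that each $A(\lambda)$ is an exponentially stable attractor of $\phi_\lambda$; it is uniformly stable if the constants $\mu,\eta,C$ can be chosen independent of $\lambda\in[\lambda_-,\lambda_+]$. (Since $A_-$ is in particular asymptotically stable for $\phi_{\lambda_-}$, the fibres defined in the claim are independent of $\eta$ for all sufficiently small $\eta>0$.) *)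

theory Defs
  imports "HOL-Analysis.Analysis"
begin

definition C1_map :: "('a::euclidean_space \<Rightarrow> real \<Rightarrow> 'a) \<Rightarrow> bool" where
  "C1_map f \<longleftrightarrow> (\<exists>D :: 'a \<times> real \<Rightarrow> ('a \<times> real) \<Rightarrow>\<^sub>L 'a.
      (\<forall>p. ((\<lambda>q. f (fst q) (snd q)) has_derivative blinfun_apply (D p)) (at p))
      \<and> continuous_on UNIV D)"

definition smooth_fun :: "(real \<Rightarrow> real) \<Rightarrow> bool" where
  "smooth_fun g \<longleftrightarrow> (\<exists>D :: nat \<Rightarrow> real \<Rightarrow> real. D 0 = g \<and>
      (\<forall>k t. (D k has_real_derivative D (Suc k) t) (at t)))"

definition parameter_shift :: "(real \<Rightarrow> real) \<Rightarrow> real \<Rightarrow> real \<Rightarrow> bool" where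
  "parameter_shift \<Lambda> lm lp \<longleftrightarrow> smooth_fun \<Lambda> \<and> (\<forall>t. lm < \<Lambda> t \<and> \<Lambda> t < lp)
     \<and> (\<Lambda> \<longlongrightarrow> lm) at_bot \<and> (\<Lambda> \<longlongrightarrow> lp) at_top
     \<and> ((\<lambda>t. deriv \<Lambda> t) \<longlongrightarrow> 0) at_bot \<and> ((\<lambda>t. deriv \<Lambda> t) \<longlongrightarrow> 0) at_top"

definition is_solution :: "(real \<Rightarrow> 'a::euclidean_space \<Rightarrow> 'a) \<Rightarrow> (real \<Rightarrow> 'a) \<Rightarrow> bool" where
  "is_solution g x \<longleftrightarrow> (\<forall>t. (x has_vector_derivative g t (x t)) (at t))"

definition sol_map :: "(real \<Rightarrow> 'a::euclidean_space \<Rightarrow> 'a) \<Rightarrow> real \<Rightarrow> real \<Rightarrow> 'a \<Rightarrow> 'a" where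
  "sol_map g t s x0 = (THE y. \<exists>x. is_solution g x \<and> x s = x0 \<and> x t = y)"

definition cocycle :: "('a::euclidean_space \<Rightarrow> real \<Rightarrow> 'a) \<Rightarrow> (real \<Rightarrow> real) \<Rightarrow> real \<Rightarrow> real \<Rightarrow> real \<Rightarrow> 'a \<Rightarrow> 'a" where
  "cocycle f \<Lambda> r t s x0 = sol_map (\<lambda>t x. f x (\<Lambda> (r * t))) t s x0"

definition flow_of :: "('a::euclidean_space \<Rightarrow> real \<Rightarrow> 'a) \<Rightarrow> real \<Rightarrow> real \<Rightarrow> 'a \<Rightarrow> 'a" where
  "flow_of f l t x0 = sol_map (\<lambda>t x. f x l) t 0 x0"

definition semidist :: "'a::metric_space set \<Rightarrow> 'a set \<Rightarrow> real" where
  "semidist X Y = (if X = {} then 0 else (SUP x\<in>X. infdist x Y))"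

definition hausdist_sets :: "'a::metric_space set \<Rightarrow> 'a set \<Rightarrow> real" where
  "hausdist_sets X Y = max (semidist X Y) (semidist Y X)"

definition nbhd :: "real \<Rightarrow> 'a::metric_space set \<Rightarrow> 'a set" where
  "nbhd \<eta> M = {x. infdist x M < \<eta>}"

definition invariant_set :: "(real \<Rightarrow> 'a \<Rightarrow> 'a) \<Rightarrow> 'a set \<Rightarrow> bool" where
  "invariant_set \<phi> M \<longleftrightarrow> (\<forall>t. \<phi> t ` M = M)"

definition exp_stable_attractor_with ::
  "(real \<Rightarrow> 'a::euclidean_space \<Rightarrow> 'a) \<Rightarrow> 'a set \<Rightarrow> real \<Rightarrow> real \<Rightarrow> real \<Rightarrow> bool" where
  "exp_stable_attractor_with \<phi> M \<mu> \<eta> C \<longleftrightarrow>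
     M \<noteq> {} \<and> compact M \<and> connected M \<and> invariant_set \<phi> M \<and>
     \<mu> > 0 \<and> \<eta> > 0 \<and> C \<ge> 1 \<and>
     (\<forall>x\<in>nbhd \<eta> M. \<forall>t>0. infdist (\<phi> t x) M \<le> C * exp (- \<mu> * t) * infdist x M)"

definition exp_stable_attractor :: "(real \<Rightarrow> 'a::euclidean_space \<Rightarrow> 'a) \<Rightarrow> 'a set \<Rightarrow> bool" where
  "exp_stable_attractor \<phi> M \<longleftrightarrow> (\<exists>\<mu> \<eta> C. exp_stable_attractor_with \<phi> M \<mu> \<eta> C)"

definition branch_of_attractors ::
  "('a::euclidean_space \<Rightarrow> real \<Rightarrow> 'a) \<Rightarrow> real \<Rightarrow> real \<Rightarrow> (real \<Rightarrow> 'a set) \<Rightarrow> bool" where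
  "branch_of_attractors f lm lp A \<longleftrightarrow>
     (\<forall>l\<in>{lm..lp}. \<forall>e>0. \<exists>d>0. \<forall>l'\<in>{lm..lp}. \<bar>l' - l\<bar> < d \<longrightarrow> hausdist_sets (A l') (A l) < e)
     \<and> (\<forall>l\<in>{lm..lp}. exp_stable_attractor (flow_of f l) (A l))"

definition uniformly_stable_branch ::
  "('a::euclidean_space \<Rightarrow> real \<Rightarrow> 'a) \<Rightarrow> real \<Rightarrow> real \<Rightarrow> (real \<Rightarrow> 'a set) \<Rightarrow> bool" where
  "uniformly_stable_branch f lm lp A \<longleftrightarrow> branch_of_attractors f lm lp A \<and>
     (\<exists>\<mu> \<eta> C. \<forall>l\<in>{lm..lp}. exp_stable_attractor_with (flow_of f l) (A l) \<mu> \<eta> C)"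

definition pullback_set_eta ::
  "('a::euclidean_space \<Rightarrow> real \<Rightarrow> 'a) \<Rightarrow> (real \<Rightarrow> real) \<Rightarrow> real \<Rightarrow> 'a set \<Rightarrow> real \<Rightarrow> real \<Rightarrow> 'a set" where
  "pullback_set_eta f \<Lambda> r Am \<eta> t =
     (\<Inter>\<tau>\<in>{0<..}. closure (\<Union>s\<in>{..-\<tau>}. cocycle f \<Lambda> r t s ` nbhd \<eta> Am))"

definition pullback_fibre ::
  "('a::euclidean_space \<Rightarrow> real \<Rightarrow> 'a) \<Rightarrow> (real \<Rightarrow> real) \<Rightarrow> real \<Rightarrow> 'a set \<Rightarrow> real \<Rightarrow> 'a set" where
  "pullback_fibre f \<Lambda> r Am t =
     (THE S. \<exists>\<eta>0>0. \<forall>\<eta>. 0 < \<eta> \<and> \<eta> < \<eta>0 \<longrightarrow> pullback_set_eta f \<Lambda> r Am \<eta> t = S)"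

definition pullback_limit_set ::
  "('a::euclidean_space \<Rightarrow> real \<Rightarrow> 'a) \<Rightarrow> (real \<Rightarrow> real) \<Rightarrow> real \<Rightarrow> 'a set \<Rightarrow> 'a set" where
  "pullback_limit_set f \<Lambda> r Am =
     (\<Inter>\<tau>\<in>{0<..}. closure (\<Union>t\<in>{\<tau>..}. pullback_fibre f \<Lambda> r Am t))"

end

theory Submission
  imports Defs "HOL-Analysis.Analysis"
begin

lemma gronwall_sq:
  fixes x y :: "real \<Rightarrow> 'a::real_inner"
  assumes ab: "a \<le> b" and L: "L \<ge> 0" and e: "e \<ge> 0"
    and dx: "\<And>t. t \<in> {a..b} \<Longrightarrow> (x has_vector_derivative x' t) (at t)"
    and dy: "\<And>t. t \<in> {a..b} \<Longrightarrow> (y has_vector_derivative y' t) (at t)"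
    and lip: "\<And>t. t \<in> {a..b} \<Longrightarrow> norm (x' t - y' t) \<le> L * norm (x t - y t) + e"
    and t: "t \<in> {a..b}"
  shows "norm (x t - y t)^2 \<le> (norm (x a - y a)^2 + e^2) * exp ((2*L+1)*(t-a))"
proof -
  define K where "K = 2*L+1"
  have K1: "K \<ge> 1" using L by (simp add: K_def)
  define z where "z = (\<lambda>t. x t - y t)"
  define p where "p = (\<lambda>t. (z t \<bullet> z t + e^2) * exp (- K * (t - a)))"
  have dz: "(z has_vector_derivative (x' s - y' s)) (at s)" if "s \<in> {a..b}" for s
    unfolding z_def using dx[OF that] dy[OF that] by (intro derivative_intros)
  have dq: "((\<lambda>t. z t \<bullet> z t) has_real_derivative (2 * (z s \<bullet> (x' s - y' s)))) (at s)"
    if "s \<in> {a..b}" for s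
  proof -
    have h: "(z has_derivative (\<lambda>h. h *\<^sub>R (x' s - y' s))) (at s)"
      using dz[OF that] by (simp add: has_vector_derivative_def)
    have "((\<lambda>t. z t \<bullet> z t) has_derivative
        (\<lambda>h. z s \<bullet> (h *\<^sub>R (x' s - y' s)) + (h *\<^sub>R (x' s - y' s)) \<bullet> z s)) (at s)"
      by (rule has_derivative_inner[OF h h])
    moreover have "(\<lambda>h. z s \<bullet> (h *\<^sub>R (x' s - y' s)) + (h *\<^sub>R (x' s - y' s)) \<bullet> z s)
        = (\<lambda>h. h * (2 * (z s \<bullet> (x' s - y' s))))"
      by (auto simp: inner_commute algebra_simps)
    moreover have "(*) (2 * (z s \<bullet> (x' s - y' s))) = (\<lambda>h. h * (2 * (z s \<bullet> (x' s - y' s))))"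
      by (auto simp: fun_eq_iff)
    ultimately show ?thesis by (simp add: has_field_derivative_def)
  qed
  have bound: "2 * (z s \<bullet> (x' s - y' s)) \<le> K * (z s \<bullet> z s + e^2)" if "s \<in> {a..b}" for s
  proof -
    have "2 * (z s \<bullet> (x' s - y' s)) \<le> 2 * (norm (z s) * norm (x' s - y' s))"
      using Cauchy_Schwarz_ineq2[of "z s" "x' s - y' s"] by simp
    also have "\<dots> \<le> 2 * (norm (z s) * (L * norm (z s) + e))"
      using lip[OF that] by (intro mult_left_mono) (auto simp: z_def)
    also have "\<dots> = 2*L*norm (z s)^2 + 2 * norm (z s) * e" by (simp add: algebra_simps power2_eq_square)
    also have "\<dots> \<le> 2*L*norm (z s)^2 + (norm (z s)^2 + e^2)"
      using sum_squares_bound[of "norm (z s)" e] by (simp add: algebra_simps)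
    also have "\<dots> \<le> K * (norm (z s)^2 + e^2)"
      using K1 L by (simp add: K_def algebra_simps)
    finally show ?thesis by (simp add: power2_norm_eq_inner)
  qed
  have "p t \<le> p a"
  proof (rule DERIV_nonpos_imp_nonincreasing[of a t p])
    show "a \<le> t" using t by simp
    fix s assume s: "a \<le> s" "s \<le> t"
    then have sab: "s \<in> {a..b}" using t by auto
    have "(p has_real_derivative (2 * (z s \<bullet> (x' s - y' s)) * exp (- K * (s - a))
        + (z s \<bullet> z s + e^2) * (exp (- K * (s - a)) * (- K)))) (at s)"
      unfolding p_def
      by (rule derivative_eq_intros dq[OF sab] | simp)+
    moreover have "2 * (z s \<bullet> (x' s - y' s)) * exp (- K * (s - a))
        + (z s \<bullet> z s + e^2) * (exp (- K * (s - a)) * (- K)) \<le> 0"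
    proof -
      have "2 * (z s \<bullet> (x' s - y' s)) * exp (- K * (s - a)) \<le> K * (z s \<bullet> z s + e^2) * exp (- K * (s - a))"
        using bound[OF sab] by (intro mult_right_mono) auto
      then show ?thesis by (simp add: algebra_simps)
    qed
    ultimately show "\<exists>y. (p has_real_derivative y) (at s) \<and> y \<le> 0" by blast
  qed
  then have "(z t \<bullet> z t + e^2) * exp (- K * (t - a)) \<le> z a \<bullet> z a + e^2"
    by (simp add: p_def)
  then have "(z t \<bullet> z t + e^2) * exp (- K * (t - a)) * exp (K * (t - a)) \<le> (z a \<bullet> z a + e^2) * exp (K * (t - a))"
    by (intro mult_right_mono) auto
  then have "z t \<bullet> z t + e^2 \<le> (z a \<bullet> z a + e^2) * exp (K * (t - a))"
    by (simp add: mult.assoc exp_add[symmetric])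
  then show ?thesis
    by (simp add: z_def K_def power2_norm_eq_inner) (smt (verit) zero_le_power2)
qed

lemma cont_induct:
  fixes q :: "real \<Rightarrow> real"
  assumes ab: "a \<le> b" and cq: "continuous_on {a..b} q" and qa: "q a < 1" and \<beta>: "\<beta> < 1"
    and step: "\<And>c. c \<in> {a..b} \<Longrightarrow> (\<forall>t\<in>{a..c}. q t \<le> 1) \<Longrightarrow> \<forall>t\<in>{a..c}. q t \<le> \<beta>"
  shows "\<forall>t\<in>{a..b}. q t \<le> \<beta>"
proof (cases "\<forall>t\<in>{a..b}. q t \<le> 1")
  case True
  then show ?thesis using step[of b] ab by auto
next
  case False
  then obtain t0 where t0: "t0 \<in> {a..b}" "q t0 > 1" by force
  define S where "S = {a..b} \<inter> q -` {1}"
  have "\<exists>x. a \<le> x \<and> x \<le> t0 \<and> q x = 1"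
    using t0 qa by (intro IVT') (auto intro: continuous_on_subset[OF cq])
  then obtain x0 where "a \<le> x0" "x0 \<le> t0" "q x0 = 1" by blast
  then have "x0 \<in> S" using t0 by (auto simp: S_def)
  then have Sne: "S \<noteq> {}" by blast
  have Scl: "closed S" unfolding S_def by (rule continuous_closed_preimage[OF cq]) auto
  have Sbd: "bdd_below S" by (auto simp: S_def bdd_below_def)
  define c where "c = Inf S"
  have cS: "c \<in> S" using closed_contains_Inf[OF Sne Sbd Scl] by (simp add: c_def)
  have below: "q t \<le> 1" if "t \<in> {a..c}" for t
  proof (rule ccontr)
    assume "\<not> q t \<le> 1"
    then have "\<exists>x. a \<le> x \<and> x \<le> t \<and> q x = 1"
      using that qa cS by (intro IVT') (auto simp: S_def intro: continuous_on_subset[OF cq])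
    then obtain x where x: "a \<le> x" "x \<le> t" "q x = 1" by blast
    have "x \<in> S" using x that cS by (auto simp: S_def)
    then have "c \<le> x" unfolding c_def using Sbd by (rule cInf_lower)
    then have "x = c" "t = c" using x that by auto
    then show False using \<open>\<not> q t \<le> 1\<close> cS by (auto simp: S_def)
  qed
  have "\<forall>t\<in>{a..c}. q t \<le> \<beta>" using step[of c] below cS by (auto simp: S_def)
  moreover have "c \<in> {a..c}" using cS by (auto simp: S_def)
  ultimately have "q c \<le> \<beta>" by blast
  then show ?thesis using cS \<beta> by (auto simp: S_def)
qed

lemma compare:
  fixes x y :: "real \<Rightarrow> 'a::euclidean_space" and f :: "'a \<Rightarrow> real \<Rightarrow> 'a"
  assumes lip: "\<And>u v l l'. norm u \<le> RB \<Longrightarrow> norm v \<le> RB \<Longrightarrow> l \<in> I \<Longrightarrow> l' \<in> I \<Longrightarrow>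
        norm (f u l - f v l') \<le> L * (norm (u - v) + \<bar>l - l'\<bar>)"
    and L: "L \<ge> 0" and ab: "a \<le> b" and E: "E \<ge> 0"
    and dx: "\<And>t. (x has_vector_derivative f (x t) (lamA t)) (at t)"
    and dy: "\<And>t. (y has_vector_derivative f (y t) (lamB t)) (at t)"
    and l1: "\<And>t. t \<in> {a..b} \<Longrightarrow> lamA t \<in> I"
    and l2: "\<And>t. t \<in> {a..b} \<Longrightarrow> lamB t \<in> I"
    and lE: "\<And>t. t \<in> {a..b} \<Longrightarrow> \<bar>lamA t - lamB t\<bar> \<le> E"
    and yR: "\<And>t. t \<in> {a..b} \<Longrightarrow> norm (y t) \<le> RB - 1"
    and \<beta>0: "\<beta> \<ge> 0" and \<beta>1: "\<beta> < 1"
    and \<beta>: "(norm (x a - y a)^2 + (L*E)^2) * exp ((2*L+1)*(b-a)) \<le> \<beta>^2"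
  shows "\<forall>t\<in>{a..b}. norm (x t - y t) \<le> \<beta>"
proof -
  have cx: "continuous_on {a..b} x"
    by (metis dx continuous_at_imp_continuous_on has_vector_derivative_continuous)
  have cy: "continuous_on {a..b} y"
    by (metis dy continuous_at_imp_continuous_on has_vector_derivative_continuous)
  have LE: "L * E \<ge> 0" using L E by simp
  have sq_imp: "norm v \<le> \<beta>" if "norm v ^2 \<le> \<beta>^2" for v :: 'a
    using power2_le_imp_le[OF that \<beta>0] .
  have "norm (x a - y a)^2 \<le> \<beta>^2"
  proof -
    have "norm (x a - y a)^2 \<le> (norm (x a - y a)^2 + (L*E)^2) * exp ((2*L+1)*(b-a))"
    proof -
      have "1 \<le> exp ((2*L+1)*(b-a))" using L ab by simp
      then have "norm (x a - y a)^2 * 1 \<le> (norm (x a - y a)^2 + (L*E)^2) * exp ((2*L+1)*(b-a))"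
        by (intro mult_mono) auto
      then show ?thesis by simp
    qed
    then show ?thesis using \<beta> by linarith
  qed
  then have "norm (x a - y a) \<le> \<beta>" by (rule sq_imp)
  then have qa: "norm (x a - y a) < 1" using \<beta>1 by linarith
  show ?thesis
  proof (rule cont_induct[where q="\<lambda>t. norm (x t - y t)", OF ab _ qa \<beta>1])
    show "continuous_on {a..b} (\<lambda>t. norm (x t - y t))"
      by (intro continuous_intros cx cy)
    fix c assume c: "c \<in> {a..b}" and le1: "\<forall>t\<in>{a..c}. norm (x t - y t) \<le> 1"
    show "\<forall>t\<in>{a..c}. norm (x t - y t) \<le> \<beta>"
    proof
      fix t assume t: "t \<in> {a..c}"
      have "norm (x t - y t)^2 \<le> (norm (x a - y a)^2 + (L*E)^2) * exp ((2*L+1)*(t-a))"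
      proof (rule gronwall_sq[where x'="\<lambda>t. f (x t) (lamA t)" and y'="\<lambda>t. f (y t) (lamB t)" and b=c])
        show "a \<le> c" using c by auto
        show "L \<ge> 0" by fact
        show "L * E \<ge> 0" by fact
        show "(x has_vector_derivative f (x s) (lamA s)) (at s)" for s by (rule dx)
        show "(y has_vector_derivative f (y s) (lamB s)) (at s)" for s by (rule dy)
        show "t \<in> {a..c}" by fact
        fix s assume s: "s \<in> {a..c}"
        then have sab: "s \<in> {a..b}" using c by auto
        have ny: "norm (y s) \<le> RB" using yR[OF sab] by simp
        have nx: "norm (x s) \<le> RB"
        proof -
          have "norm (x s) \<le> norm (y s) + norm (x s - y s)" by (rule norm_triangle_sub)
          moreover have "norm (x s - y s) \<le> 1" using le1 s by blast
          ultimately show ?thesis using yR[OF sab] by linarith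
        qed
        have "norm (f (x s) (lamA s) - f (y s) (lamB s)) \<le> L * (norm (x s - y s) + \<bar>lamA s - lamB s\<bar>)"
          by (rule lip[OF nx ny l1[OF sab] l2[OF sab]])
        also have "\<dots> \<le> L * (norm (x s - y s) + E)"
          using lE[OF sab] L by (intro mult_left_mono) auto
        finally show "norm (f (x s) (lamA s) - f (y s) (lamB s)) \<le> L * norm (x s - y s) + L * E"
          by (simp add: algebra_simps)
      qed
      also have "\<dots> \<le> (norm (x a - y a)^2 + (L*E)^2) * exp ((2*L+1)*(b-a))"
        using t c L by (intro mult_left_mono) auto
      also have "\<dots> \<le> \<beta>^2" by fact
      finally show "norm (x t - y t) \<le> \<beta>" by (rule sq_imp)
    qed
  qed
qed

locale ctx =
  fixes f :: "'a::euclidean_space \<Rightarrow> real \<Rightarrow> 'a" and \<Lambda> :: "real \<Rightarrow> real" and lm lp :: real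
    and A :: "real \<Rightarrow> 'a set" and \<mu> \<eta>s C :: real
  assumes C1: "C1_map f" and lmlp: "lm < lp" and ps: "parameter_shift \<Lambda> lm lp"
    and ex_r: "\<forall>r>0. \<forall>s x0. \<exists>x. is_solution (\<lambda>t x. f x (\<Lambda> (r * t))) x \<and> x s = x0"
    and ex_l: "\<forall>l\<in>{lm..lp}. \<forall>x0. \<exists>x. is_solution (\<lambda>t x. f x l) x \<and> x 0 = x0"
    and br: "branch_of_attractors f lm lp A"
    and us: "\<forall>l\<in>{lm..lp}. exp_stable_attractor_with (flow_of f l) (A l) \<mu> \<eta>s C"
begin

lemma cst: "\<mu> > 0" "\<eta>s > 0" "C \<ge> 1"
  using us lmlp unfolding exp_stable_attractor_with_def by (auto dest: bspec[of _ _ lm])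

lemma A_ne: "l \<in> {lm..lp} \<Longrightarrow> A l \<noteq> {}"
  and A_compact: "l \<in> {lm..lp} \<Longrightarrow> compact (A l)"
  using us unfolding exp_stable_attractor_with_def by auto

lemma A_closed: "l \<in> {lm..lp} \<Longrightarrow> closed (A l)"
  using A_compact compact_imp_closed by blast

lemma stab: "l \<in> {lm..lp} \<Longrightarrow> infdist x (A l) < \<eta>s \<Longrightarrow> t > 0 \<Longrightarrow>
    infdist (flow_of f l t x) (A l) \<le> C * exp (- \<mu> * t) * infdist x (A l)"
  using us unfolding exp_stable_attractor_with_def nbhd_def by auto

lemma semidist_pt:
  assumes X: "compact X" and Y: "Y \<noteq> {}" and s: "semidist X Y < e" and x: "x \<in> X"
  shows "infdist x Y < e"
proof -
  have "X \<noteq> {}" using x by auto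
  have "compact ((\<lambda>x. infdist x Y) ` X)"
    by (intro compact_continuous_image continuous_intros X)
  then have bdd: "bdd_above ((\<lambda>x. infdist x Y) ` X)"
    by (intro bounded_imp_bdd_above compact_imp_bounded)
  have "infdist x Y \<le> (SUP x\<in>X. infdist x Y)" by (rule cSUP_upper[OF x bdd])
  also have "\<dots> = semidist X Y" using \<open>X \<noteq> {}\<close> by (simp add: semidist_def)
  finally show ?thesis using s by linarith
qed

lemma near_cont:
  assumes l: "l \<in> {lm..lp}" and e: "e > 0"
  shows "\<exists>d>0. \<forall>l'\<in>{lm..lp}. \<bar>l' - l\<bar> < d \<longrightarrow>
     (\<forall>a\<in>A l'. infdist a (A l) < e) \<and> (\<forall>a\<in>A l. infdist a (A l') < e)"
proof -
  obtain d where d: "d > 0" "\<forall>l'\<in>{lm..lp}. \<bar>l' - l\<bar> < d \<longrightarrow> hausdist_sets (A l') (A l) < e"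
    using br l e unfolding branch_of_attractors_def by blast
  have "(\<forall>a\<in>A l'. infdist a (A l) < e) \<and> (\<forall>a\<in>A l. infdist a (A l') < e)"
    if l': "l' \<in> {lm..lp}" "\<bar>l' - l\<bar> < d" for l'
  proof -
    have h: "hausdist_sets (A l') (A l) < e" using d l' by blast
    show ?thesis
      using h A_compact[OF l'(1)] A_ne[OF l] A_compact[OF l] A_ne[OF l'(1)]
      by (auto intro: semidist_pt simp: hausdist_sets_def)
  qed
  then show ?thesis using d(1) by blast
qed

lemma switch:
  fixes X :: "'a set"
  assumes X: "compact X" "X \<noteq> {}" and h: "\<forall>a\<in>X. infdist a Y \<le> h"
  shows "infdist x Y \<le> infdist x X + h"
proof -
  obtain a where a: "a \<in> X" "infdist x X = dist x a"
    using infdist_attains_inf[OF compact_imp_closed[OF X(1)] X(2)] by blast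
  have "infdist x Y \<le> infdist a Y + dist x a" by (rule infdist_triangle)
  then show ?thesis using a h by auto
qed

lemma unif:
  assumes e: "e > 0"
  shows "\<exists>d>0. \<forall>l1\<in>{lm..lp}. \<forall>l2\<in>{lm..lp}. \<bar>l1 - l2\<bar> < d \<longrightarrow> (\<forall>a\<in>A l1. infdist a (A l2) \<le> e)"
proof -
  have ex: "\<forall>l\<in>{lm..lp}. \<exists>d>0. \<forall>l'\<in>{lm..lp}. \<bar>l' - l\<bar> < d \<longrightarrow>
     (\<forall>a\<in>A l'. infdist a (A l) < e/2) \<and> (\<forall>a\<in>A l. infdist a (A l') < e/2)"
  proof
    fix l assume l: "l \<in> {lm..lp}"
    have "e/2 > 0" using e by simp
    from near_cont[OF l this] show "\<exists>d>0. \<forall>l'\<in>{lm..lp}. \<bar>l' - l\<bar> < d \<longrightarrow>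
     (\<forall>a\<in>A l'. infdist a (A l) < e/2) \<and> (\<forall>a\<in>A l. infdist a (A l') < e/2)" .
  qed
  obtain dd where dd: "\<forall>l\<in>{lm..lp}. dd l > 0 \<and> (\<forall>l'\<in>{lm..lp}. \<bar>l' - l\<bar> < dd l \<longrightarrow>
     (\<forall>a\<in>A l'. infdist a (A l) < e/2) \<and> (\<forall>a\<in>A l. infdist a (A l') < e/2))"
    using bchoice[OF ex] by blast
  have cov: "{lm..lp} \<subseteq> \<Union>((\<lambda>l. ball l (dd l)) ` {lm..lp})"
  proof
    fix l assume l: "l \<in> {lm..lp}"
    then have "l \<in> ball l (dd l)" using dd by auto
    then show "l \<in> \<Union>((\<lambda>l. ball l (dd l)) ` {lm..lp})" using l by blast
  qed
  obtain \<epsilon> where \<epsilon>: "\<epsilon> > 0" "\<And>x. x \<in> {lm..lp} \<Longrightarrow> \<exists>G\<in>(\<lambda>l. ball l (dd l)) ` {lm..lp}. ball x \<epsilon> \<subseteq> G"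
    using Heine_Borel_lemma[OF compact_Icc cov] by auto
  show ?thesis
  proof (intro exI[of _ \<epsilon>] conjI ballI impI \<epsilon>(1))
    fix l1 l2 a assume l1: "l1 \<in> {lm..lp}" and l2: "l2 \<in> {lm..lp}" and d12: "\<bar>l1 - l2\<bar> < \<epsilon>"
      and a: "a \<in> A l1"
    obtain c where c: "c \<in> {lm..lp}" "ball l1 \<epsilon> \<subseteq> ball c (dd c)" using \<epsilon>(2)[OF l1] by auto
    have "l1 \<in> ball l1 \<epsilon>" using \<epsilon>(1) by simp
    then have "l1 \<in> ball c (dd c)" using c by blast
    then have c1: "\<bar>l1 - c\<bar> < dd c" by (simp add: dist_real_def abs_minus_commute)
    have "l2 \<in> ball l1 \<epsilon>" using d12 by (simp add: dist_real_def)
    then have "l2 \<in> ball c (dd c)" using c by auto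
    then have c2: "\<bar>l2 - c\<bar> < dd c" by (simp add: dist_real_def abs_minus_commute)
    have i1: "infdist a (A c) < e/2" using dd c l1 c1 a by blast
    have i2: "\<forall>b\<in>A c. infdist b (A l2) \<le> e/2" using dd c l2 c2 by (meson less_imp_le)
    have "infdist a (A l2) \<le> infdist a (A c) + e/2"
      by (rule switch[OF A_compact[OF c(1)] A_ne[OF c(1)] i2])
    then show "infdist a (A l2) \<le> e" using i1 by linarith
  qed
qed

lemma Rbound: "\<exists>R\<ge>0. \<forall>l\<in>{lm..lp}. \<forall>a\<in>A l. norm a \<le> R"
proof -
  obtain d where d: "d > 0" "\<forall>l1\<in>{lm..lp}. \<forall>l2\<in>{lm..lp}. \<bar>l1 - l2\<bar> < d \<longrightarrow> (\<forall>a\<in>A l1. infdist a (A l2) \<le> 1)"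
    using unif[of 1] by auto
  have cov: "{lm..lp} \<subseteq> (\<Union>c\<in>{lm..lp}. ball c d)" using d(1) by force
  obtain C' where C': "C' \<subseteq> {lm..lp}" "finite C'" "{lm..lp} \<subseteq> (\<Union>c\<in>C'. ball c d)"
    using compactE_image[OF compact_Icc _ cov] by blast
  have "compact (\<Union>c\<in>C'. A c)" using C' A_compact by blast
  then obtain B where B: "\<forall>x\<in>(\<Union>c\<in>C'. A c). norm x \<le> B"
    using compact_imp_bounded bounded_iff by metis
  show ?thesis
  proof (intro exI[of _ "max 0 (B + 1)"] conjI ballI)
    fix l a assume l: "l \<in> {lm..lp}" and a: "a \<in> A l"
    obtain c where c: "c \<in> C'" "l \<in> ball c d" using C' l by blast
    have cI: "c \<in> {lm..lp}" using c C' by blast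
    have "\<bar>l - c\<bar> < d" using c by (simp add: dist_real_def abs_minus_commute)
    then have "infdist a (A c) \<le> 1" using d l cI a by blast
    moreover obtain b where b: "b \<in> A c" "infdist a (A c) = dist a b"
      using infdist_attains_inf[OF A_closed[OF cI] A_ne[OF cI]] by blast
    moreover have "norm b \<le> B" using B b c by blast
    moreover have "norm a \<le> norm b + dist a b"
      by (metis dist_norm norm_triangle_sub add.commute)
    ultimately show "norm a \<le> max 0 (B + 1)" by linarith
  qed simp
qed

lemma lip_f:
  "\<exists>L>0. \<forall>u v l l'. norm u \<le> R' \<longrightarrow> norm v \<le> R' \<longrightarrow> l \<in> {lm..lp} \<longrightarrow> l' \<in> {lm..lp} \<longrightarrow>
      norm (f u l - f v l') \<le> L * (norm (u - v) + \<bar>l - l'\<bar>)"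
proof -
  obtain D :: "'a \<times> real \<Rightarrow> ('a \<times> real) \<Rightarrow>\<^sub>L 'a" where
    D: "\<And>p. ((\<lambda>q. f (fst q) (snd q)) has_derivative blinfun_apply (D p)) (at p)"
       "continuous_on UNIV D"
    using C1 unfolding C1_map_def by blast
  define S where "S = cball (0::'a) R' \<times> {lm..lp}"
  have cS: "compact S" unfolding S_def by (intro compact_Times compact_cball compact_Icc)
  have vS: "convex S" unfolding S_def by (intro convex_Times convex_cball convex_real_interval)
  have "compact (D ` S)" by (intro compact_continuous_image continuous_on_subset[OF D(2)] cS) auto
  then obtain B where B: "\<forall>x\<in>D ` S. norm x \<le> B" using compact_imp_bounded bounded_iff by metis
  have bnd: "norm ((\<lambda>q. f (fst q) (snd q)) p - (\<lambda>q. f (fst q) (snd q)) q) \<le> B * norm (p - q)"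
    if "p \<in> S" "q \<in> S" for p q
  proof (rule differentiable_bound[OF vS _ _ that])
    show "((\<lambda>q. f (fst q) (snd q)) has_derivative blinfun_apply (D x)) (at x within S)" for x
      using D(1) has_derivative_at_withinI by blast
    show "onorm (blinfun_apply (D x)) \<le> B" if "x \<in> S" for x
      using B that by (simp add: norm_blinfun.rep_eq[symmetric])
  qed
  show ?thesis
  proof (intro exI[of _ "max 1 B"] conjI allI impI)
    fix u v :: 'a and l l' :: real assume u: "norm u \<le> R'" and v: "norm v \<le> R'" and l: "l \<in> {lm..lp}" and l': "l' \<in> {lm..lp}"
    have "norm (f u l - f v l') \<le> B * norm ((u, l) - (v, l'))"
      using bnd[of "(u,l)" "(v,l')"] u v l l' by (simp add: S_def)
    also have "\<dots> \<le> max 1 B * norm ((u, l) - (v, l'))"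
      by (intro mult_right_mono) auto
    also have "norm ((u, l) - (v, l')) \<le> norm (u - v) + \<bar>l - l'\<bar>"
      using norm_Pair_le[of "u - v" "l - l'"] by simp
    then have "max 1 B * norm ((u, l) - (v, l')) \<le> max 1 B * (norm (u - v) + \<bar>l - l'\<bar>)"
      by (intro mult_left_mono) auto
    finally show "norm (f u l - f v l') \<le> max 1 B * (norm (u - v) + \<bar>l - l'\<bar>)" .
  qed simp
qed

lemma Lam_range: "lm < \<Lambda> t" "\<Lambda> t < lp"
  using ps unfolding parameter_shift_def by auto

lemma Lam_I: "\<Lambda> t \<in> {lm..lp}"
  using Lam_range[of t] by auto

lemma Lam_lip: "\<exists>M>0. \<forall>a b. \<bar>\<Lambda> a - \<Lambda> b\<bar> \<le> M * \<bar>a - b\<bar>"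
proof -
  obtain D where D0: "D 0 = \<Lambda>" and Dd: "\<And>k t. (D k has_real_derivative D (Suc k) t) (at t)"
    using ps unfolding parameter_shift_def smooth_fun_def by blast
  define D1 where "D1 = D (Suc 0)"
  have dL: "(\<Lambda> has_real_derivative D1 t) (at t)" for t using Dd[of 0 t] D0 by (simp add: D1_def)
  have eqd: "(\<lambda>t. deriv \<Lambda> t) = D1" using dL DERIV_imp_deriv by blast
  have top: "(D1 \<longlongrightarrow> 0) at_top" and bot: "(D1 \<longlongrightarrow> 0) at_bot"
    using ps eqd unfolding parameter_shift_def by auto
  have "eventually (\<lambda>t. dist (D1 t) 0 < 1) at_top"
    using top by (rule tendstoD) simp
  then obtain N where N: "\<forall>t\<ge>N. \<bar>D1 t\<bar> < 1" by (auto simp: eventually_at_top_linorder dist_real_def)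
  have "eventually (\<lambda>t. dist (D1 t) 0 < 1) at_bot"
    using bot by (rule tendstoD) simp
  then obtain N' where N': "\<forall>t\<le>N'. \<bar>D1 t\<bar> < 1" by (auto simp: eventually_at_bot_linorder dist_real_def)
  have cD1: "continuous_on UNIV D1"
    unfolding D1_def by (metis Dd DERIV_isCont continuous_at_imp_continuous_on)
  have "compact (D1 ` {N'..N})"
    by (intro compact_continuous_image continuous_on_subset[OF cD1] compact_Icc) auto
  then obtain B where B: "\<forall>x\<in>D1 ` {N'..N}. norm x \<le> B" using compact_imp_bounded bounded_iff by metis
  define M where "M = max 1 B"
  have Mb: "\<bar>D1 t\<bar> \<le> M" for t
  proof (cases "t \<ge> N \<or> t \<le> N'")
    case True then show ?thesis using N N' by (force simp: M_def)
  next
    case False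
    then have "t \<in> {N'..N}" by auto
    then have "norm (D1 t) \<le> B" using B by blast
    then show ?thesis by (simp add: M_def)
  qed
  have lipab: "\<bar>\<Lambda> b - \<Lambda> a\<bar> \<le> M * \<bar>b - a\<bar>" if ab: "a < b" for a b
  proof -
    obtain z where "\<Lambda> b - \<Lambda> a = (b - a) * D1 z" using MVT2[OF ab, of \<Lambda> D1] dL by blast
    then have "\<bar>\<Lambda> b - \<Lambda> a\<bar> = \<bar>b - a\<bar> * \<bar>D1 z\<bar>" by (simp add: abs_mult)
    also have "\<dots> \<le> \<bar>b - a\<bar> * M" using Mb by (intro mult_left_mono) auto
    finally show ?thesis by (simp add: mult.commute)
  qed
  show ?thesis
  proof (intro exI[of _ M] conjI allI)
    show "M > 0" by (simp add: M_def)
    fix a b :: real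
    show "\<bar>\<Lambda> a - \<Lambda> b\<bar> \<le> M * \<bar>a - b\<bar>"
    proof (cases a b rule: linorder_cases)
      case less then show ?thesis using lipab[OF less] by (simp add: abs_minus_commute)
    next
      case equal then show ?thesis by simp
    next
      case greater then show ?thesis using lipab[OF greater] by simp
    qed
  qed
qed

lemma Lam_bot: "e > 0 \<Longrightarrow> \<exists>S. \<forall>u\<le>S. \<bar>\<Lambda> u - lm\<bar> < e"
proof -
  assume e: "e > 0"
  have "(\<Lambda> \<longlongrightarrow> lm) at_bot" using ps unfolding parameter_shift_def by auto
  then have "eventually (\<lambda>u. dist (\<Lambda> u) lm < e) at_bot" using e by (rule tendstoD)
  then show ?thesis by (auto simp: eventually_at_bot_linorder dist_real_def)
qed

lemma Lam_top: "e > 0 \<Longrightarrow> \<exists>S. \<forall>u\<ge>S. \<bar>\<Lambda> u - lp\<bar> < e"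
proof -
  assume e: "e > 0"
  have "(\<Lambda> \<longlongrightarrow> lp) at_top" using ps unfolding parameter_shift_def by auto
  then have "eventually (\<lambda>u. dist (\<Lambda> u) lp < e) at_top" using e by (rule tendstoD)
  then show ?thesis by (auto simp: eventually_at_top_linorder dist_real_def)
qed

end

lemma gronwall_zero:
  fixes x y :: "real \<Rightarrow> 'a::real_inner"
  assumes ab: "a \<le> b" and L: "L \<ge> 0"
    and dx: "\<And>t. (x has_vector_derivative x' t) (at t)"
    and dy: "\<And>t. (y has_vector_derivative y' t) (at t)"
    and lip: "\<And>t. t \<in> {a..b} \<Longrightarrow> norm (x' t - y' t) \<le> L * norm (x t - y t)"
    and eq: "x a = y a"
  shows "x b = y b"
proof -
  have "norm (x b - y b)^2 \<le> (norm (x a - y a)^2 + 0^2) * exp ((2*L+1)*(b-a))"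
    by (rule gronwall_sq[OF ab L _ dx dy]) (use lip ab in auto)
  then show ?thesis using eq by simp
qed

context ctx
begin

lemma uniq:
  assumes lam: "\<And>t. lam t \<in> {lm..lp}"
    and x: "\<And>t. (x has_vector_derivative f (x t) (lam t)) (at t)"
    and y: "\<And>t. (y has_vector_derivative f (y t) (lam t)) (at t)"
    and eq: "x s = y s"
  shows "x t = y t"
proof -
  have cx: "continuous_on UNIV x"
    by (metis x continuous_at_imp_continuous_on has_vector_derivative_continuous)
  have cy: "continuous_on UNIV y"
    by (metis y continuous_at_imp_continuous_on has_vector_derivative_continuous)
  define J where "J = {min s t..max s t}"
  have "compact (x ` J \<union> y ` J)" unfolding J_def
    by (intro compact_Un compact_continuous_image continuous_on_subset[OF cx] continuous_on_subset[OF cy] compact_Icc) auto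
  then obtain B where B: "\<forall>z\<in>x ` J \<union> y ` J. norm z \<le> B" using compact_imp_bounded bounded_iff by metis
  obtain L where L: "L > 0" "\<forall>u v l l'. norm u \<le> B \<longrightarrow> norm v \<le> B \<longrightarrow> l \<in> {lm..lp} \<longrightarrow> l' \<in> {lm..lp} \<longrightarrow>
      norm (f u l - f v l') \<le> L * (norm (u - v) + \<bar>l - l'\<bar>)"
    using lip_f[of B] by blast
  have lipJ: "norm (f (x u) (lam u) - f (y u) (lam u)) \<le> L * norm (x u - y u)" if "u \<in> J" for u
  proof -
    have "norm (x u) \<le> B" "norm (y u) \<le> B" using B that by auto
    then show ?thesis using L(2) lam[of u] by fastforce
  qed
  show ?thesis
  proof (cases "s \<le> t")
    case True
    show ?thesis
    proof (rule gronwall_zero[OF True _ x y _ eq])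
      show "0 \<le> L" using L by simp
      fix u assume "u \<in> {s..t}"
      then have "u \<in> J" using True by (auto simp: J_def)
      then show "norm (f (x u) (lam u) - f (y u) (lam u)) \<le> L * norm (x u - y u)" by (rule lipJ)
    qed
  next
    case False
    define x2 where "x2 = (\<lambda>u. x (- u))"
    define y2 where "y2 = (\<lambda>u. y (- u))"
    have d2: "(x2 has_vector_derivative (- f (x (- u)) (lam (- u)))) (at u)" for u
    proof -
      have "((x \<circ> uminus) has_vector_derivative ((-1) *\<^sub>R f (x (- u)) (lam (- u)))) (at u)"
        by (rule vector_diff_chain_at) (auto intro!: derivative_eq_intros x)
      then show ?thesis by (simp add: x2_def o_def)
    qed
    have e2: "(y2 has_vector_derivative (- f (y (- u)) (lam (- u)))) (at u)" for u
    proof -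
      have "((y \<circ> uminus) has_vector_derivative ((-1) *\<^sub>R f (y (- u)) (lam (- u)))) (at u)"
        by (rule vector_diff_chain_at) (auto intro!: derivative_eq_intros y)
      then show ?thesis by (simp add: y2_def o_def)
    qed
    have "x2 (- t) = y2 (- t)"
    proof (rule gronwall_zero[of "- s" "- t" L x2 _ y2])
      show "- s \<le> - t" using False by simp
      show "0 \<le> L" using L by simp
      show "(x2 has_vector_derivative (- f (x (- u)) (lam (- u)))) (at u)" for u by (rule d2)
      show "(y2 has_vector_derivative (- f (y (- u)) (lam (- u)))) (at u)" for u by (rule e2)
      show "x2 (- s) = y2 (- s)" using eq by (simp add: x2_def y2_def)
      fix u assume "u \<in> {- s..- t}"
      then have "- u \<in> J" using False by (auto simp: J_def)
      then have "norm (f (x (- u)) (lam (- u)) - f (y (- u)) (lam (- u))) \<le> L * norm (x (- u) - y (- u))"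
        by (rule lipJ)
      then show "norm (- f (x (- u)) (lam (- u)) - - f (y (- u)) (lam (- u))) \<le> L * norm (x2 u - y2 u)"
        by (simp add: x2_def y2_def norm_minus_commute)
    qed
    then show ?thesis by (simp add: x2_def y2_def)
  qed
qed

lemma sol_r:
  assumes r: "r > 0" and x: "is_solution (\<lambda>t x. f x (\<Lambda> (r * t))) x"
  shows "cocycle f \<Lambda> r t s (x s) = x t"
  unfolding cocycle_def sol_map_def
proof (rule the_equality)
  show "\<exists>x'. is_solution (\<lambda>t x. f x (\<Lambda> (r * t))) x' \<and> x' s = x s \<and> x' t = x t" using x by blast
  fix z assume "\<exists>x'. is_solution (\<lambda>t x. f x (\<Lambda> (r * t))) x' \<and> x' s = x s \<and> x' t = z"
  then obtain x' where x': "is_solution (\<lambda>t x. f x (\<Lambda> (r * t))) x'" "x' s = x s" "x' t = z" by blast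
  have "x' t = x t"
    by (rule uniq[of "\<lambda>t. \<Lambda> (r * t)"]) (use x x' Lam_I in \<open>auto simp: is_solution_def\<close>)
  then show "z = x t" using x' by simp
qed

lemma sol_l:
  assumes l: "l \<in> {lm..lp}" and y: "is_solution (\<lambda>t x. f x l) y"
  shows "flow_of f l t (y 0) = y t"
  unfolding flow_of_def sol_map_def
proof (rule the_equality)
  show "\<exists>x'. is_solution (\<lambda>t x. f x l) x' \<and> x' 0 = y 0 \<and> x' t = y t" using y by blast
  fix z assume "\<exists>x'. is_solution (\<lambda>t x. f x l) x' \<and> x' 0 = y 0 \<and> x' t = z"
  then obtain x' where x': "is_solution (\<lambda>t x. f x l) x'" "x' 0 = y 0" "x' t = z" by blast
  have "x' t = y t"
    by (rule uniq[of "\<lambda>t. l"]) (use y x' l in \<open>auto simp: is_solution_def\<close>)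
  then show "z = y t" using x' by simp
qed

lemma cocy:
  assumes r: "r > 0"
  shows "cocycle f \<Lambda> r t u (cocycle f \<Lambda> r u s p) = cocycle f \<Lambda> r t s p"
proof -
  obtain x where x: "is_solution (\<lambda>t x. f x (\<Lambda> (r * t))) x" "x s = p" using ex_r r by blast
  show ?thesis using sol_r[OF r x(1), of u s] sol_r[OF r x(1), of t u] sol_r[OF r x(1), of t s] x(2)
    by simp
qed

definition "RR = (SOME R. R \<ge> 0 \<and> (\<forall>l\<in>{lm..lp}. \<forall>a\<in>A l. norm a \<le> R))"

lemma RR: "RR \<ge> 0" "l \<in> {lm..lp} \<Longrightarrow> a \<in> A l \<Longrightarrow> norm a \<le> RR"
  using someI_ex[OF Rbound] unfolding RR_def by auto

definition "LL = (SOME L. L > 0 \<and> (\<forall>u v l l'. norm u \<le> RR + C * \<eta>s + 1 \<longrightarrow> norm v \<le> RR + C * \<eta>s + 1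
   \<longrightarrow> l \<in> {lm..lp} \<longrightarrow> l' \<in> {lm..lp} \<longrightarrow> norm (f u l - f v l') \<le> L * (norm (u - v) + \<bar>l - l'\<bar>)))"

lemma LL: "LL > 0" "norm u \<le> RR + C * \<eta>s + 1 \<Longrightarrow> norm v \<le> RR + C * \<eta>s + 1
   \<Longrightarrow> l \<in> {lm..lp} \<Longrightarrow> l' \<in> {lm..lp} \<Longrightarrow> norm (f u l - f v l') \<le> LL * (norm (u - v) + \<bar>l - l'\<bar>)"
  using someI_ex[OF lip_f[of "RR + C * \<eta>s + 1"]] unfolding LL_def by auto

definition "KK = 2 * LL + 1"

lemma step:
  assumes r: "r > 0" and l: "l \<in> {lm..lp}" and T: "T > 0" and d: "infdist p (A l) < \<eta>s"
    and E: "E \<ge> 0" and lE: "\<forall>v\<in>{t0..t0+T}. \<bar>\<Lambda> (r * v) - l\<bar> \<le> E"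
    and \<beta>1: "LL * E * exp (KK * T / 2) < 1"
    and u: "u \<in> {0..T}"
  shows "infdist (cocycle f \<Lambda> r (t0 + u) t0 p) (A l)
     \<le> C * exp (- \<mu> * u) * infdist p (A l) + LL * E * exp (KK * T / 2)"
proof -
  obtain x where x: "is_solution (\<lambda>t x. f x (\<Lambda> (r * t))) x" "x t0 = p" using ex_r r by blast
  obtain y0 where y0: "is_solution (\<lambda>t x. f x l) y0" "y0 0 = p" using ex_l l by blast
  define y where "y = (\<lambda>t. y0 (t - t0))"
  have dy: "(y has_vector_derivative f (y t) l) (at t)" for t
  proof -
    have "(((\<lambda>t. t - t0)) has_vector_derivative 1) (at t)" by (auto intro!: derivative_eq_intros)
    from vector_diff_chain_at[OF this, of y0 "f (y0 (t - t0)) l"]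
    show ?thesis using y0(1) unfolding is_solution_def y_def o_def by simp
  qed
  have flow: "flow_of f l v p = y (t0 + v)" for v
    using sol_l[OF l y0(1), of v] y0(2) by (simp add: y_def)
  have C1: "C \<ge> 1" and \<mu>: "\<mu> > 0" and \<eta>: "\<eta>s > 0" using cst by auto
  define dd where "dd = infdist p (A l)"
  have dd0: "dd \<ge> 0" by (simp add: dd_def infdist_nonneg)
  have ybound: "infdist (y (t0 + v)) (A l) \<le> C * exp (- \<mu> * v) * dd" if v: "v \<ge> 0" for v
  proof (cases "v = 0")
    case True
    have "dd \<le> C * dd" using C1 dd0 by (simp add: mult_le_cancel_right1)
    then show ?thesis using True y0(2) by (simp add: y_def dd_def)
  next
    case False
    then have "v > 0" using v by simp
    then show ?thesis using stab[OF l d, of v] flow[of v] by (simp add: dd_def)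
  qed
  have ynorm: "norm (y t) \<le> RR + C * \<eta>s + 1 - 1" if t: "t \<in> {t0..t0+T}" for t
  proof -
    have "infdist (y (t0 + (t - t0))) (A l) \<le> C * exp (- \<mu> * (t - t0)) * dd"
      using ybound[of "t - t0"] t by simp
    also have "\<dots> \<le> C * 1 * dd"
      using t \<mu> C1 dd0 by (intro mult_right_mono mult_left_mono) auto
    also have "\<dots> \<le> C * \<eta>s" using d C1 by (simp add: dd_def)
    finally have i: "infdist (y t) (A l) \<le> C * \<eta>s" by simp
    obtain a where a: "a \<in> A l" "infdist (y t) (A l) = dist (y t) a"
      using infdist_attains_inf[OF A_closed[OF l] A_ne[OF l]] by blast
    have "norm (y t) \<le> norm a + dist (y t) a"
      by (metis dist_norm norm_triangle_sub add.commute)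
    then show ?thesis using i a RR(2)[OF l a(1)] by simp
  qed
  define \<beta> where "\<beta> = LL * E * exp (KK * T / 2)"
  have \<beta>0: "\<beta> \<ge> 0" using LL(1) E by (simp add: \<beta>_def)
  have cmp: "\<forall>t\<in>{t0..t0+T}. norm (x t - y t) \<le> \<beta>"
  proof (rule compare[where lamA="\<lambda>t. \<Lambda> (r * t)" and lamB="\<lambda>t. l" and I="{lm..lp}" and RB="RR + C * \<eta>s + 1"])
    show "\<And>u v l l'. norm u \<le> RR + C * \<eta>s + 1 \<Longrightarrow> norm v \<le> RR + C * \<eta>s + 1 \<Longrightarrow>
      l \<in> {lm..lp} \<Longrightarrow> l' \<in> {lm..lp} \<Longrightarrow> norm (f u l - f v l') \<le> LL * (norm (u - v) + \<bar>l - l'\<bar>)"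
      by (rule LL(2))
    show "0 \<le> LL" using LL(1) by simp
    show "t0 \<le> t0 + T" using T by simp
    show "0 \<le> E" by fact
    show "(x has_vector_derivative f (x t) (\<Lambda> (r * t))) (at t)" for t
      using x(1) by (simp add: is_solution_def)
    show "(y has_vector_derivative f (y t) l) (at t)" for t by (rule dy)
    show "\<Lambda> (r * t) \<in> {lm..lp}" for t by (rule Lam_I)
    show "l \<in> {lm..lp}" by fact
    show "\<bar>\<Lambda> (r * t) - l\<bar> \<le> E" if "t \<in> {t0..t0+T}" for t using lE that by blast
    show "norm (y t) \<le> RR + C * \<eta>s + 1 - 1" if "t \<in> {t0..t0+T}" for t using ynorm that by blast
    show "0 \<le> \<beta>" by fact
    show "\<beta> < 1" using \<beta>1 by (simp add: \<beta>_def)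
    have "x t0 = y t0" using x(2) y0(2) by (simp add: y_def)
    then have "(norm (x t0 - y t0)^2 + (LL*E)^2) * exp ((2*LL+1)*(t0 + T - t0)) = (LL*E)^2 * exp (KK * T)"
      by (simp add: KK_def)
    also have "\<dots> = \<beta>^2"
    proof -
      have "exp (KK * T) = exp (KK * T / 2)^2"
        by (simp add: power2_eq_square exp_add[symmetric])
      then show ?thesis by (simp add: \<beta>_def power_mult_distrib)
    qed
    finally show "(norm (x t0 - y t0)^2 + (LL*E)^2) * exp ((2*LL+1)*(t0 + T - t0)) \<le> \<beta>^2" by simp
  qed
  have "cocycle f \<Lambda> r (t0 + u) t0 p = x (t0 + u)" using sol_r[OF r x(1)] x(2) by metis
  moreover have "norm (x (t0 + u) - y (t0 + u)) \<le> \<beta>" using cmp u by auto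
  moreover have "infdist (x (t0 + u)) (A l) \<le> infdist (y (t0 + u)) (A l) + dist (x (t0 + u)) (y (t0 + u))"
    by (rule infdist_triangle)
  moreover have "infdist (y (t0 + u)) (A l) \<le> C * exp (- \<mu> * u) * dd" using ybound u by auto
  ultimately show ?thesis by (simp add: dist_norm dd_def \<beta>_def)
qed

end

lemma decomp:
  fixes T t t0 :: real
  assumes T: "T > 0" and t: "t \<ge> t0"
  shows "\<exists>n::nat. \<exists>u. 0 \<le> u \<and> u < T \<and> t = t0 + real n * T + u"
proof -
  define x where "x = (t - t0) / T"
  have x0: "x \<ge> 0" using T t by (simp add: x_def)
  define n where "n = nat \<lfloor>x\<rfloor>"
  have nx: "real n = of_int \<lfloor>x\<rfloor>" using x0 by (simp add: n_def)
  have f1: "of_int \<lfloor>x\<rfloor> \<le> x" "x < of_int \<lfloor>x\<rfloor> + 1" by linarith+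
  have xT: "x * T = t - t0" using T by (simp add: x_def)
  have "real n * T \<le> x * T" using f1(1) nx T by (intro mult_right_mono) auto
  then have a: "real n * T \<le> t - t0" using xT by simp
  have "x * T < (real n + 1) * T" using f1(2) nx T by (intro mult_strict_right_mono) auto
  then have b: "t - t0 < real n * T + T" using xT by (simp add: algebra_simps)
  show ?thesis
    by (rule exI[of _ n], rule exI[of _ "t - t0 - real n * T"]) (use a b in auto)
qed

context ctx
begin

definition "MM = (SOME M. M > 0 \<and> (\<forall>a b. \<bar>\<Lambda> a - \<Lambda> b\<bar> \<le> M * \<bar>a - b\<bar>))"

lemma MM: "MM > 0" "\<bar>\<Lambda> a - \<Lambda> b\<bar> \<le> MM * \<bar>a - b\<bar>"
  using someI_ex[OF Lam_lip] unfolding MM_def by auto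

definition "T0 = ln (4 * C) / \<mu>"

lemma T0: "T0 > 0" "C * exp (- \<mu> * T0) = 1/4"
proof -
  have C1: "C \<ge> 1" and \<mu>: "\<mu> > 0" using cst by auto
  show "T0 > 0" using C1 \<mu> by (simp add: T0_def)
  have "- \<mu> * T0 = - ln (4 * C)" using \<mu> by (simp add: T0_def)
  then have "exp (- \<mu> * T0) = 1 / (4 * C)" using C1 by (simp add: exp_minus inverse_eq_divide)
  then show "C * exp (- \<mu> * T0) = 1/4" using C1 by simp
qed

definition good :: "real \<Rightarrow> real \<Rightarrow> real \<Rightarrow> bool" where
  "good r \<rho> hh \<longleftrightarrow> r > 0 \<and> \<rho> > 0 \<and> \<rho> < \<eta>s \<and> hh \<ge> 0 \<and>
     (\<forall>l1\<in>{lm..lp}. \<forall>l2\<in>{lm..lp}. \<bar>l1 - l2\<bar> \<le> MM * r * T0 \<longrightarrow> (\<forall>a\<in>A l1. infdist a (A l2) \<le> hh)) \<and>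
     LL * (MM * r * T0) * exp (KK * T0 / 2) < 1 \<and>
     LL * (MM * r * T0) * exp (KK * T0 / 2) + hh \<le> \<rho> / 4"

lemma window:
  assumes g: "good r \<rho> hh" and p: "infdist p (A (\<Lambda> (r * t0))) \<le> \<rho>"
  shows "infdist (cocycle f \<Lambda> r (t0 + T0) t0 p) (A (\<Lambda> (r * (t0 + T0)))) \<le> \<rho>"
    and "u \<in> {0..T0} \<Longrightarrow> infdist (cocycle f \<Lambda> r (t0 + u) t0 p) (A (\<Lambda> (r * (t0 + u)))) \<le> (C + 1) * \<rho>"
proof -
  have r: "r > 0" and \<rho>: "\<rho> > 0" "\<rho> < \<eta>s" and hh: "hh \<ge> 0"
    and hyp: "\<forall>l1\<in>{lm..lp}. \<forall>l2\<in>{lm..lp}. \<bar>l1 - l2\<bar> \<le> MM * r * T0 \<longrightarrow> (\<forall>a\<in>A l1. infdist a (A l2) \<le> hh)"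
    and b1: "LL * (MM * r * T0) * exp (KK * T0 / 2) < 1"
    and b2: "LL * (MM * r * T0) * exp (KK * T0 / 2) + hh \<le> \<rho> / 4"
    using g unfolding good_def by auto
  define \<beta> where "\<beta> = LL * (MM * r * T0) * exp (KK * T0 / 2)"
  define l where "l = \<Lambda> (r * t0)"
  have l: "l \<in> {lm..lp}" unfolding l_def by (rule Lam_I)
  have C1: "C \<ge> 1" and \<mu>: "\<mu> > 0" using cst by auto
  have d: "infdist p (A l) < \<eta>s" using p \<rho> by (simp add: l_def)
  have E: "MM * r * T0 \<ge> 0" using MM(1) r T0(1) by simp
  have lE: "\<forall>v\<in>{t0..t0+T0}. \<bar>\<Lambda> (r * v) - l\<bar> \<le> MM * r * T0"
  proof
    fix v assume v: "v \<in> {t0..t0+T0}"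
    have "\<bar>\<Lambda> (r * v) - l\<bar> \<le> MM * \<bar>r * v - r * t0\<bar>" unfolding l_def by (rule MM(2))
    also have "\<bar>r * v - r * t0\<bar> = r * (v - t0)" using v r by (simp add: right_diff_distrib[symmetric])
    also have "MM * (r * (v - t0)) \<le> MM * (r * T0)" using v r MM(1) by (intro mult_left_mono) auto
    finally show "\<bar>\<Lambda> (r * v) - l\<bar> \<le> MM * r * T0" by (simp add: mult.assoc)
  qed
  have key: "infdist (cocycle f \<Lambda> r (t0 + u) t0 p) (A (\<Lambda> (r * (t0 + u))))
      \<le> C * exp (- \<mu> * u) * infdist p (A l) + \<beta> + hh" if u: "u \<in> {0..T0}" for u
  proof -
    have s: "infdist (cocycle f \<Lambda> r (t0 + u) t0 p) (A l)
     \<le> C * exp (- \<mu> * u) * infdist p (A l) + \<beta>"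
      using step[OF r l T0(1) d E lE _ u] b1 by (simp add: \<beta>_def)
    have l2: "\<Lambda> (r * (t0 + u)) \<in> {lm..lp}" by (rule Lam_I)
    have "\<bar>l - \<Lambda> (r * (t0 + u))\<bar> \<le> MM * r * T0"
      using lE u by (auto simp: abs_minus_commute)
    then have h: "\<forall>a\<in>A l. infdist a (A (\<Lambda> (r * (t0 + u)))) \<le> hh" using hyp l l2 by blast
    have "infdist (cocycle f \<Lambda> r (t0 + u) t0 p) (A (\<Lambda> (r * (t0 + u))))
        \<le> infdist (cocycle f \<Lambda> r (t0 + u) t0 p) (A l) + hh"
      by (rule switch[OF A_compact[OF l] A_ne[OF l] h])
    then show ?thesis using s by linarith
  qed
  have dd0: "infdist p (A l) \<ge> 0" by (simp add: infdist_nonneg)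
  have pl: "infdist p (A l) \<le> \<rho>" using p by (simp add: l_def)
  show "infdist (cocycle f \<Lambda> r (t0 + T0) t0 p) (A (\<Lambda> (r * (t0 + T0)))) \<le> \<rho>"
  proof -
    have "C * exp (- \<mu> * T0) * infdist p (A l) \<le> C * exp (- \<mu> * T0) * \<rho>"
      using pl C1 by (intro mult_left_mono) auto
    also have "C * exp (- \<mu> * T0) * \<rho> = \<rho> / 4" using T0(2) by simp
    finally have "C * exp (- \<mu> * T0) * infdist p (A l) \<le> \<rho> / 4" .
    then show ?thesis using key[of T0] T0(1) b2 \<rho> by (simp add: \<beta>_def)
  qed
  assume u: "u \<in> {0..T0}"
  have "C * exp (- \<mu> * u) * infdist p (A l) \<le> C * 1 * \<rho>"
    using pl C1 u \<mu> dd0 by (intro mult_mono) auto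
  then show "infdist (cocycle f \<Lambda> r (t0 + u) t0 p) (A (\<Lambda> (r * (t0 + u)))) \<le> (C + 1) * \<rho>"
    using key[OF u] b2 \<rho> by (simp add: \<beta>_def algebra_simps)
qed

lemma iter:
  assumes g: "good r \<rho> hh" and p: "infdist p (A (\<Lambda> (r * t0))) \<le> \<rho>"
  shows "infdist (cocycle f \<Lambda> r (t0 + real n * T0) t0 p) (A (\<Lambda> (r * (t0 + real n * T0)))) \<le> \<rho>"
proof (induction n)
  case 0
  have r: "r > 0" using g by (simp add: good_def)
  obtain x where x: "is_solution (\<lambda>t x. f x (\<Lambda> (r * t))) x" "x t0 = p" using ex_r r by blast
  have "cocycle f \<Lambda> r t0 t0 p = p" using sol_r[OF r x(1), of t0 t0] x(2) by simp
  then show ?case using p by simp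
next
  case (Suc n)
  have r: "r > 0" using g by (simp add: good_def)
  define q where "q = cocycle f \<Lambda> r (t0 + real n * T0) t0 p"
  have "infdist (cocycle f \<Lambda> r (t0 + real n * T0 + T0) (t0 + real n * T0) q)
          (A (\<Lambda> (r * (t0 + real n * T0 + T0)))) \<le> \<rho>"
    by (rule window(1)[OF g]) (use Suc in \<open>simp add: q_def\<close>)
  moreover have "cocycle f \<Lambda> r (t0 + real n * T0 + T0) (t0 + real n * T0) q
      = cocycle f \<Lambda> r (t0 + real (Suc n) * T0) t0 p"
    unfolding q_def using cocy[OF r] by (simp add: algebra_simps)
  ultimately show ?case by (simp add: algebra_simps)
qed

lemma traj:
  assumes g: "good r \<rho> hh" and p: "infdist p (A (\<Lambda> (r * t0))) \<le> \<rho>" and t: "t \<ge> t0"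
  shows "infdist (cocycle f \<Lambda> r t t0 p) (A (\<Lambda> (r * t))) \<le> (C + 1) * \<rho>"
proof -
  have r: "r > 0" using g by (simp add: good_def)
  obtain n :: nat and u where nu: "0 \<le> u" "u < T0" "t = t0 + real n * T0 + u"
    using decomp[OF T0(1) t] by blast
  define q where "q = cocycle f \<Lambda> r (t0 + real n * T0) t0 p"
  have "infdist (cocycle f \<Lambda> r (t0 + real n * T0 + u) (t0 + real n * T0) q)
          (A (\<Lambda> (r * (t0 + real n * T0 + u)))) \<le> (C + 1) * \<rho>"
    by (rule window(2)[OF g]) (use iter[OF g p, of n] nu in \<open>auto simp: q_def\<close>)
  moreover have "cocycle f \<Lambda> r (t0 + real n * T0 + u) (t0 + real n * T0) q = cocycle f \<Lambda> r t t0 p"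
    unfolding q_def using cocy[OF r] nu(3) by simp
  ultimately show ?thesis using nu(3) by simp
qed

lemma exists_good:
  assumes \<rho>: "\<rho> > 0" "\<rho> < \<eta>s"
  shows "\<exists>\<delta>>0. \<forall>r. 0 < r \<and> r < \<delta> \<longrightarrow> good r \<rho> (\<rho>/8)"
proof -
  obtain du where du: "du > 0" "\<forall>l1\<in>{lm..lp}. \<forall>l2\<in>{lm..lp}. \<bar>l1 - l2\<bar> < du \<longrightarrow> (\<forall>a\<in>A l1. infdist a (A l2) \<le> \<rho>/8)"
    using unif[of "\<rho>/8"] \<rho> by auto
  define X where "X = LL * MM * T0 * exp (KK * T0 / 2)"
  have X: "X > 0" using LL(1) MM(1) T0(1) by (simp add: X_def)
  have MT: "MM * T0 > 0" using MM(1) T0(1) by simp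
  define \<delta> where "\<delta> = min (du / (MM * T0)) (min (\<rho>/8) (1/2) / X)"
  have \<delta>: "\<delta> > 0" using du X MT \<rho> by (simp add: \<delta>_def)
  show ?thesis
  proof (intro exI[of _ \<delta>] conjI allI impI \<delta>)
    fix r assume r: "0 < r \<and> r < \<delta>"
    have "r < du / (MM * T0)" using r by (simp add: \<delta>_def)
    then have rdu: "MM * r * T0 < du" using MT by (simp add: pos_less_divide_eq mult.commute mult.left_commute)
    have "r < min (\<rho>/8) (1/2) / X" using r by (simp add: \<delta>_def)
    then have "r * X < min (\<rho>/8) (1/2)" using X by (simp add: pos_less_divide_eq)
    moreover have eq: "LL * (MM * r * T0) * exp (KK * T0 / 2) = r * X" unfolding X_def by (simp add: algebra_simps)
    ultimately have bb: "LL * (MM * r * T0) * exp (KK * T0 / 2) < min (\<rho>/8) (1/2)" by (simp only: eq)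
    show "good r \<rho> (\<rho>/8)"
      unfolding good_def
    proof (intro conjI)
      show "\<forall>l1\<in>{lm..lp}. \<forall>l2\<in>{lm..lp}. \<bar>l1 - l2\<bar> \<le> MM * r * T0 \<longrightarrow> (\<forall>a\<in>A l1. infdist a (A l2) \<le> \<rho> / 8)"
        using du(2) rdu by force
    qed (use r \<rho> bb in auto)
  qed
qed

end

context ctx
begin

lemma cocy_id: "r > 0 \<Longrightarrow> cocycle f \<Lambda> r t t p = p"
proof -
  assume r: "r > 0"
  obtain x where x: "is_solution (\<lambda>t x. f x (\<Lambda> (r * t))) x" "x t = p" using ex_r r by blast
  show ?thesis using sol_r[OF r x(1), of t t] x(2) by simp
qed

lemma nbhd_mono: "\<eta> \<le> \<eta>' \<Longrightarrow> nbhd \<eta> S \<subseteq> nbhd \<eta>' S"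
  by (auto simp: nbhd_def)

lemma pb_mono:
  assumes "\<eta> \<le> \<eta>'"
  shows "pullback_set_eta f \<Lambda> r S \<eta> t \<subseteq> pullback_set_eta f \<Lambda> r S \<eta>' t"
proof
  fix y assume y: "y \<in> pullback_set_eta f \<Lambda> r S \<eta> t"
  show "y \<in> pullback_set_eta f \<Lambda> r S \<eta>' t"
    unfolding pullback_set_eta_def
  proof (rule INT_I)
    fix \<tau> :: real assume \<tau>: "\<tau> \<in> {0<..}"
    have "y \<in> closure (\<Union>s\<in>{..-\<tau>}. cocycle f \<Lambda> r t s ` nbhd \<eta> S)"
      using y \<tau> unfolding pullback_set_eta_def by blast
    moreover have "closure (\<Union>s\<in>{..-\<tau>}. cocycle f \<Lambda> r t s ` nbhd \<eta> S)
        \<subseteq> closure (\<Union>s\<in>{..-\<tau>}. cocycle f \<Lambda> r t s ` nbhd \<eta>' S)"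
      using nbhd_mono[OF assms, of S] by (intro closure_mono) blast
    ultimately show "y \<in> closure (\<Union>s\<in>{..-\<tau>}. cocycle f \<Lambda> r t s ` nbhd \<eta>' S)" by blast
  qed
qed

lemma pb_sub:
  assumes Z: "closed Z" and \<tau>: "\<tau> > 0"
    and h: "\<And>s x. s \<le> - \<tau> \<Longrightarrow> x \<in> nbhd \<eta> S \<Longrightarrow> cocycle f \<Lambda> r t s x \<in> Z"
  shows "pullback_set_eta f \<Lambda> r S \<eta> t \<subseteq> Z"
proof -
  have "pullback_set_eta f \<Lambda> r S \<eta> t \<subseteq> closure (\<Union>s\<in>{..-\<tau>}. cocycle f \<Lambda> r t s ` nbhd \<eta> S)"
    unfolding pullback_set_eta_def using \<tau> by blast
  also have "\<dots> \<subseteq> Z" using h by (intro closure_minimal Z) auto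
  finally show ?thesis .
qed

lemma contract:
  assumes r: "r > 0" and \<eta>: "0 < \<eta>" "\<eta> < \<eta>'" "\<eta>' < \<eta>s"
  shows "\<exists>T1 S1. \<forall>s\<le>S1. \<forall>x\<in>nbhd \<eta>' (A lm). cocycle f \<Lambda> r (s + T1) s x \<in> nbhd \<eta> (A lm)"
proof -
  have C1: "C \<ge> 1" and \<mu>: "\<mu> > 0" using cst by auto
  have lmI: "lm \<in> {lm..lp}" using lmlp by simp
  define T1 where "T1 = max 1 (ln (2 * C * \<eta>' / \<eta>) / \<mu>)"
  have T1: "T1 > 0" by (simp add: T1_def)
  have pos: "2 * C * \<eta>' / \<eta> > 0" using C1 \<eta> by simp
  have "\<mu> * T1 \<ge> \<mu> * (ln (2 * C * \<eta>' / \<eta>) / \<mu>)" using \<mu> by (intro mult_left_mono) (auto simp: T1_def)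
  then have mT: "\<mu> * T1 \<ge> ln (2 * C * \<eta>' / \<eta>)" using \<mu> by simp
  have "exp (- \<mu> * T1) \<le> exp (- ln (2 * C * \<eta>' / \<eta>))" using mT by simp
  also have "\<dots> = \<eta> / (2 * C * \<eta>')" using pos by (simp add: exp_minus inverse_eq_divide)
  finally have ex: "exp (- \<mu> * T1) \<le> \<eta> / (2 * C * \<eta>')" .
  have ce: "C * exp (- \<mu> * T1) * \<eta>' \<le> \<eta> / 2"
  proof -
    have "C * exp (- \<mu> * T1) * \<eta>' \<le> C * (\<eta> / (2 * C * \<eta>')) * \<eta>'"
      using ex C1 \<eta> by (intro mult_right_mono mult_left_mono) auto
    also have "\<dots> = \<eta> / 2" using C1 \<eta> by (simp add: field_simps)
    finally show ?thesis .
  qed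
  define b where "b = min 1 (\<eta> / 2)"
  have b: "b > 0" "b \<le> 1" "b \<le> \<eta> / 2" using \<eta> by (auto simp: b_def)
  define E0 where "E0 = b / (2 * LL * exp (KK * T1 / 2))"
  have E0: "E0 > 0" using b LL(1) by (simp add: E0_def)
  have bE: "LL * E0 * exp (KK * T1 / 2) = b / 2" using LL(1) by (simp add: E0_def field_simps)
  obtain S where S: "\<forall>u\<le>S. \<bar>\<Lambda> u - lm\<bar> < E0" using Lam_bot[OF E0] by blast
  have "\<forall>s\<le>S / r - T1. \<forall>x\<in>nbhd \<eta>' (A lm). cocycle f \<Lambda> r (s + T1) s x \<in> nbhd \<eta> (A lm)"
  proof (intro allI impI ballI)
    fix s x assume s: "s \<le> S / r - T1" and x: "x \<in> nbhd \<eta>' (A lm)"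
    have d: "infdist x (A lm) < \<eta>'" using x by (simp add: nbhd_def)
    have lE: "\<forall>v\<in>{s..s+T1}. \<bar>\<Lambda> (r * v) - lm\<bar> \<le> E0"
    proof
      fix v assume v: "v \<in> {s..s+T1}"
      have "v \<le> S / r" using v s by simp
      then have "r * v \<le> S" using r by (simp add: pos_le_divide_eq mult.commute)
      then show "\<bar>\<Lambda> (r * v) - lm\<bar> \<le> E0" using S by (simp add: less_imp_le)
    qed
    have st: "infdist (cocycle f \<Lambda> r (s + T1) s x) (A lm)
      \<le> C * exp (- \<mu> * T1) * infdist x (A lm) + LL * E0 * exp (KK * T1 / 2)"
    proof -
      have d': "infdist x (A lm) < \<eta>s" using d \<eta> by linarith
      have b1: "LL * E0 * exp (KK * T1 / 2) < 1" using bE b by linarith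
      have u: "T1 \<in> {0..T1}" using T1 by simp
      show ?thesis using step[OF r lmI T1 d' less_imp_le[OF E0] lE b1 u] .
    qed
    have "C * exp (- \<mu> * T1) * infdist x (A lm) \<le> C * exp (- \<mu> * T1) * \<eta>'"
      using d C1 by (intro mult_left_mono) auto
    then have "infdist (cocycle f \<Lambda> r (s + T1) s x) (A lm) \<le> \<eta>/2 + b/2" using st ce bE by linarith
    then show "cocycle f \<Lambda> r (s + T1) s x \<in> nbhd \<eta> (A lm)" using b \<eta> by (simp add: nbhd_def)
  qed
  then show ?thesis by blast
qed

lemma eta_le:
  assumes r: "r > 0" and \<eta>: "0 < \<eta>" "\<eta> \<le> \<eta>'" "\<eta>' < \<eta>s"
  shows "pullback_set_eta f \<Lambda> r (A lm) \<eta>' t \<subseteq> pullback_set_eta f \<Lambda> r (A lm) \<eta> t"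
proof (cases "\<eta> = \<eta>'")
  case True then show ?thesis by simp
next
  case False
  then have lt: "\<eta> < \<eta>'" using \<eta> by simp
  obtain T1 S1 where TS: "\<forall>s\<le>S1. \<forall>x\<in>nbhd \<eta>' (A lm). cocycle f \<Lambda> r (s + T1) s x \<in> nbhd \<eta> (A lm)"
    using contract[OF r \<eta>(1) lt \<eta>(3)] by blast
  show ?thesis
  proof
    fix y assume y: "y \<in> pullback_set_eta f \<Lambda> r (A lm) \<eta>' t"
    show "y \<in> pullback_set_eta f \<Lambda> r (A lm) \<eta> t"
      unfolding pullback_set_eta_def
    proof (rule INT_I)
      fix \<tau> :: real assume \<tau>: "\<tau> \<in> {0<..}"
      define \<tau>' where "\<tau>' = max 1 (max (\<tau> + T1) (- S1))"
      have \<tau>': "\<tau>' \<in> {0<..}" by (simp add: \<tau>'_def)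
      have "y \<in> closure (\<Union>s\<in>{..-\<tau>'}. cocycle f \<Lambda> r t s ` nbhd \<eta>' (A lm))"
        using y \<tau>' unfolding pullback_set_eta_def by blast
      moreover have "(\<Union>s\<in>{..-\<tau>'}. cocycle f \<Lambda> r t s ` nbhd \<eta>' (A lm))
          \<subseteq> (\<Union>s\<in>{..-\<tau>}. cocycle f \<Lambda> r t s ` nbhd \<eta> (A lm))"
      proof
        fix z assume "z \<in> (\<Union>s\<in>{..-\<tau>'}. cocycle f \<Lambda> r t s ` nbhd \<eta>' (A lm))"
        then obtain s x where s: "s \<le> - \<tau>'" and x: "x \<in> nbhd \<eta>' (A lm)" and z: "z = cocycle f \<Lambda> r t s x"
          by auto
        have sS: "s \<le> S1" using s by (simp add: \<tau>'_def)
        have w: "cocycle f \<Lambda> r (s + T1) s x \<in> nbhd \<eta> (A lm)" using TS sS x by blast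
        have st: "s + T1 \<le> - \<tau>" using s by (simp add: \<tau>'_def)
        have "z = cocycle f \<Lambda> r t (s + T1) (cocycle f \<Lambda> r (s + T1) s x)"
          using cocy[OF r] z by simp
        then show "z \<in> (\<Union>s\<in>{..-\<tau>}. cocycle f \<Lambda> r t s ` nbhd \<eta> (A lm))"
          using w st by blast
      qed
      ultimately show "y \<in> closure (\<Union>s\<in>{..-\<tau>}. cocycle f \<Lambda> r t s ` nbhd \<eta> (A lm))"
        using closure_mono by blast
    qed
  qed
qed

lemma eta_eq:
  assumes r: "r > 0" and "0 < \<eta>1" "\<eta>1 < \<eta>s" "0 < \<eta>2" "\<eta>2 < \<eta>s"
  shows "pullback_set_eta f \<Lambda> r (A lm) \<eta>1 t = pullback_set_eta f \<Lambda> r (A lm) \<eta>2 t"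
proof (cases "\<eta>1 \<le> \<eta>2")
  case True
  then show ?thesis using eta_le[OF r, of \<eta>1 \<eta>2] pb_mono[OF True] assms by blast
next
  case False
  then have le: "\<eta>2 \<le> \<eta>1" by simp
  then show ?thesis using eta_le[OF r, of \<eta>2 \<eta>1] pb_mono[OF le] assms by blast
qed

lemma fibre_eq:
  assumes r: "r > 0" and \<eta>: "0 < \<eta>" "\<eta> < \<eta>s"
  shows "pullback_fibre f \<Lambda> r (A lm) t = pullback_set_eta f \<Lambda> r (A lm) \<eta> t"
  unfolding pullback_fibre_def
proof (rule the_equality)
  show "\<exists>\<eta>0>0. \<forall>\<eta>'. 0 < \<eta>' \<and> \<eta>' < \<eta>0 \<longrightarrow>
      pullback_set_eta f \<Lambda> r (A lm) \<eta>' t = pullback_set_eta f \<Lambda> r (A lm) \<eta> t"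
    using eta_eq[OF r _ _ \<eta>] cst(2) by blast
  fix S assume "\<exists>\<eta>0>0. \<forall>\<eta>'. 0 < \<eta>' \<and> \<eta>' < \<eta>0 \<longrightarrow> pullback_set_eta f \<Lambda> r (A lm) \<eta>' t = S"
  then obtain \<eta>0 where \<eta>0: "\<eta>0 > 0" "\<forall>\<eta>'. 0 < \<eta>' \<and> \<eta>' < \<eta>0 \<longrightarrow> pullback_set_eta f \<Lambda> r (A lm) \<eta>' t = S"
    by blast
  define \<eta>'' where "\<eta>'' = min \<eta>0 \<eta>s / 2"
  have h: "0 < \<eta>''" "\<eta>'' < \<eta>0" "\<eta>'' < \<eta>s" using \<eta>0(1) cst(2) by (auto simp: \<eta>''_def)
  then have "S = pullback_set_eta f \<Lambda> r (A lm) \<eta>'' t" using \<eta>0(2) by auto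
  also have "\<dots> = pullback_set_eta f \<Lambda> r (A lm) \<eta> t" using eta_eq[OF r h(1) h(3) \<eta>] .
  finally show "S = pullback_set_eta f \<Lambda> r (A lm) \<eta> t" .
qed

lemma start:
  assumes r: "r > 0" and \<rho>: "\<rho> > 0"
  shows "\<exists>S0. \<forall>s\<le>S0. \<forall>x. infdist x (A lm) < \<rho>/2 \<longrightarrow> infdist x (A (\<Lambda> (r * s))) \<le> \<rho>"
proof -
  have lmI: "lm \<in> {lm..lp}" using lmlp by simp
  obtain d0 where d0: "d0 > 0" "\<forall>l'\<in>{lm..lp}. \<bar>l' - lm\<bar> < d0 \<longrightarrow>
     (\<forall>a\<in>A l'. infdist a (A lm) < \<rho>/2) \<and> (\<forall>a\<in>A lm. infdist a (A l') < \<rho>/2)"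
    using near_cont[OF lmI, of "\<rho>/2"] \<rho> by auto
  obtain S where S: "\<forall>u\<le>S. \<bar>\<Lambda> u - lm\<bar> < d0" using Lam_bot[OF d0(1)] by blast
  show ?thesis
  proof (intro exI[of _ "S / r"] allI impI)
    fix s x assume s: "s \<le> S / r" and x: "infdist x (A lm) < \<rho>/2"
    have "r * s \<le> S" using s r by (simp add: pos_le_divide_eq mult.commute)
    then have "\<bar>\<Lambda> (r * s) - lm\<bar> < d0" using S by blast
    then have h: "\<forall>a\<in>A lm. infdist a (A (\<Lambda> (r * s))) \<le> \<rho>/2" using d0(2) Lam_I by (meson less_imp_le)
    have "infdist x (A (\<Lambda> (r * s))) \<le> infdist x (A lm) + \<rho>/2"
      by (rule switch[OF A_compact[OF lmI] A_ne[OF lmI] h])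
    then show "infdist x (A (\<Lambda> (r * s))) \<le> \<rho>" using x by linarith
  qed
qed

lemma closed_sub: "closed {z. infdist z S \<le> c}"
  by (intro closed_Collect_le continuous_on_infdist continuous_on_id continuous_on_const)

lemma part1:
  assumes \<epsilon>: "\<epsilon> > 0"
  shows "\<exists>\<delta>>0. \<forall>r t. 0 < r \<and> r < \<delta> \<longrightarrow> semidist (pullback_fibre f \<Lambda> r (A lm) t) (A (\<Lambda> (r * t))) < \<epsilon>"
proof -
  have C1: "C \<ge> 1" and \<eta>s: "\<eta>s > 0" using cst by auto
  define \<rho> where "\<rho> = min (\<epsilon> / (2 * (C + 1))) (\<eta>s / 2)"
  have \<rho>: "\<rho> > 0" "\<rho> < \<eta>s" using \<epsilon> C1 \<eta>s by (auto simp: \<rho>_def)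
  have C\<rho>: "(C + 1) * \<rho> \<le> \<epsilon> / 2"
  proof -
    have "(C + 1) * \<rho> \<le> (C + 1) * (\<epsilon> / (2 * (C + 1)))" using C1 by (intro mult_left_mono) (auto simp: \<rho>_def)
    also have "\<dots> = \<epsilon> / 2" using C1 by (simp add: field_simps)
    finally show ?thesis .
  qed
  obtain \<delta> where \<delta>: "\<delta> > 0" "\<forall>r. 0 < r \<and> r < \<delta> \<longrightarrow> good r \<rho> (\<rho>/8)" using exists_good[OF \<rho>] by blast
  show ?thesis
  proof (intro exI[of _ \<delta>] conjI allI impI \<delta>(1))
    fix r t assume r: "0 < r \<and> r < \<delta>"
    have g: "good r \<rho> (\<rho>/8)" using \<delta> r by blast
    have r0: "r > 0" using r by simp
    obtain S0 where S0: "\<forall>s\<le>S0. \<forall>x. infdist x (A lm) < \<rho>/2 \<longrightarrow> infdist x (A (\<Lambda> (r * s))) \<le> \<rho>"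
      using start[OF r0 \<rho>(1)] by blast
    define \<eta> where "\<eta> = min (\<rho>/2) (\<eta>s/2)"
    have \<eta>: "0 < \<eta>" "\<eta> < \<eta>s" "\<eta> \<le> \<rho>/2" using \<rho> \<eta>s by (auto simp: \<eta>_def)
    have sub: "pullback_fibre f \<Lambda> r (A lm) t \<subseteq> {z. infdist z (A (\<Lambda> (r * t))) \<le> \<epsilon> / 2}"
      unfolding fibre_eq[OF r0 \<eta>(1,2)]
    proof (rule pb_sub[OF closed_sub, of "max 1 (max (- t) (- S0))"])
      show "max 1 (max (- t) (- S0)) > 0" by simp
      fix s x assume s: "s \<le> - max 1 (max (- t) (- S0))" and x: "x \<in> nbhd \<eta> (A lm)"
      have sS: "s \<le> S0" "s \<le> t" using s by auto
      have "infdist x (A lm) < \<rho>/2" using x \<eta> by (simp add: nbhd_def)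
      then have "infdist x (A (\<Lambda> (r * s))) \<le> \<rho>" using S0 sS by blast
      then have "infdist (cocycle f \<Lambda> r t s x) (A (\<Lambda> (r * t))) \<le> (C + 1) * \<rho>"
        by (rule traj[OF g _ sS(2)])
      then show "cocycle f \<Lambda> r t s x \<in> {z. infdist z (A (\<Lambda> (r * t))) \<le> \<epsilon> / 2}" using C\<rho> by simp
    qed
    show "semidist (pullback_fibre f \<Lambda> r (A lm) t) (A (\<Lambda> (r * t))) < \<epsilon>"
    proof (cases "pullback_fibre f \<Lambda> r (A lm) t = {}")
      case True then show ?thesis using \<epsilon> by (simp add: semidist_def)
    next
      case False
      have "(SUP x\<in>pullback_fibre f \<Lambda> r (A lm) t. infdist x (A (\<Lambda> (r * t)))) \<le> \<epsilon> / 2"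
        using sub by (intro cSUP_least False) auto
      then show ?thesis using False \<epsilon> by (simp add: semidist_def)
    qed
  qed
qed

end

context ctx
begin

lemma part2: "\<exists>\<delta>>0. \<forall>r. 0 < r \<and> r < \<delta> \<longrightarrow> pullback_limit_set f \<Lambda> r (A lm) \<subseteq> A lp"
proof -
  have C1: "C \<ge> 1" and \<eta>s: "\<eta>s > 0" and \<mu>: "\<mu> > 0" using cst by auto
  have lpI: "lp \<in> {lm..lp}" using lmlp by simp
  define \<rho> where "\<rho> = \<eta>s / (8 * (C + 1))"
  have "\<eta>s * 1 < \<eta>s * (8 * (C + 1))" using C1 \<eta>s by (intro mult_strict_left_mono) auto
  then have \<rho>: "\<rho> > 0" "\<rho> < \<eta>s" using C1 \<eta>s by (auto simp: \<rho>_def divide_less_eq)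
  have C\<rho>: "(C + 1) * \<rho> = \<eta>s / 8" using C1 by (simp add: \<rho>_def field_simps)
  obtain \<delta> where \<delta>: "\<delta> > 0" "\<forall>r. 0 < r \<and> r < \<delta> \<longrightarrow> good r \<rho> (\<rho>/8)" using exists_good[OF \<rho>] by blast
  show ?thesis
  proof (intro exI[of _ \<delta>] conjI allI impI \<delta>(1))
    fix r assume r: "0 < r \<and> r < \<delta>"
    have g: "good r \<rho> (\<rho>/8)" using \<delta> r by blast
    have r0: "r > 0" using r by simp
    obtain S0 where S0: "\<forall>s\<le>S0. \<forall>x. infdist x (A lm) < \<rho>/2 \<longrightarrow> infdist x (A (\<Lambda> (r * s))) \<le> \<rho>"
      using start[OF r0 \<rho>(1)] by blast
    define \<eta> where "\<eta> = min (\<rho>/2) (\<eta>s/2)"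
    have \<eta>: "0 < \<eta>" "\<eta> < \<eta>s" "\<eta> \<le> \<rho>/2" using \<rho> \<eta>s by (auto simp: \<eta>_def)
    have kc: "\<exists>\<tau>1>0. \<forall>t\<ge>\<tau>1. pullback_fibre f \<Lambda> r (A lm) t \<subseteq> {z. infdist z (A lp) \<le> \<epsilon>'}"
      if \<epsilon>': "\<epsilon>' > 0" for \<epsilon>'
    proof -
      define b where "b = min 1 (min (\<eta>s / 16) (\<epsilon>' / (4 * C)))"
      have b: "b > 0" "b \<le> 1" "b \<le> \<eta>s / 16" "b \<le> \<epsilon>' / (4 * C)" using \<eta>s \<epsilon>' C1 by (auto simp: b_def)
      define E0 where "E0 = b / (2 * LL * exp (KK * T0 / 2))"
      have E0: "E0 > 0" using b LL(1) by (simp add: E0_def)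
      define \<beta> where "\<beta> = LL * E0 * exp (KK * T0 / 2)"
      have \<beta>: "\<beta> = b / 2" using LL(1) by (simp add: \<beta>_def E0_def field_simps)
      obtain St where St: "\<forall>u\<ge>St. \<bar>\<Lambda> u - lp\<bar> < E0" using Lam_top[OF E0] by blast
      obtain d1 where d1: "d1 > 0" "\<forall>l'\<in>{lm..lp}. \<bar>l' - lp\<bar> < d1 \<longrightarrow>
          (\<forall>a\<in>A l'. infdist a (A lp) < \<eta>s/16) \<and> (\<forall>a\<in>A lp. infdist a (A l') < \<eta>s/16)"
        using near_cont[OF lpI, of "\<eta>s/16"] \<eta>s by auto
      obtain St2 where St2: "\<forall>u\<ge>St2. \<bar>\<Lambda> u - lp\<bar> < d1" using Lam_top[OF d1(1)] by blast
      define t0 where "t0 = max 0 (max (St / r) (St2 / r))"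
      have t0a: "t0 \<ge> 0" "t0 \<ge> St / r" "t0 \<ge> St2 / r" by (auto simp: t0_def)
      have "r * t0 \<ge> r * (St / r)" "r * t0 \<ge> r * (St2 / r)"
        using t0a r0 by (intro mult_left_mono; simp)+
      then have t0: "t0 \<ge> 0" "r * t0 \<ge> St" "r * t0 \<ge> St2" using r0 t0a by auto
      have lE: "\<forall>v\<in>{t1..t1+T0}. \<bar>\<Lambda> (r * v) - lp\<bar> \<le> E0" if t1: "t1 \<ge> t0" for t1
      proof
        fix v assume v: "v \<in> {t1..t1+T0}"
        have "r * v \<ge> r * t0" using v t1 r0 by (intro mult_left_mono) auto
        then have "r * v \<ge> St" using t0 by linarith
        then show "\<bar>\<Lambda> (r * v) - lp\<bar> \<le> E0" using St by (simp add: less_imp_le)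
      qed
      have b1: "\<beta> < 1" using \<beta> b by simp
      have stepT: "infdist (cocycle f \<Lambda> r (t1 + u) t1 q) (A lp) \<le> C * exp (- \<mu> * u) * infdist q (A lp) + \<beta>"
        if "t1 \<ge> t0" "infdist q (A lp) < \<eta>s" "u \<in> {0..T0}" for t1 q u
        using step[OF r0 lpI T0(1) that(2) less_imp_le[OF E0] lE[OF that(1)] _ that(3)] b1
        by (simp add: \<beta>_def)
      have ic: "infdist (cocycle f \<Lambda> r (t0 + real k * T0) t0 w) (A lp) \<le> (\<eta>s/4) / 2^k + 2 * \<beta>"
        if w: "infdist w (A lp) \<le> \<eta>s/4" for w k
      proof (induction k)
        case 0
        then show ?case using w cocy_id[OF r0] \<beta> b by simp
      next
        case (Suc k)
        define q where "q = cocycle f \<Lambda> r (t0 + real k * T0) t0 w"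
        have qk: "infdist q (A lp) \<le> (\<eta>s/4) / 2^k + 2 * \<beta>" using Suc by (simp add: q_def)
        have "(\<eta>s/4) / 2^k \<le> \<eta>s/4" using \<eta>s by (simp add: divide_le_eq_1 field_simps)
        then have q\<eta>: "infdist q (A lp) < \<eta>s" using qk \<beta> b \<eta>s by linarith
        have t1: "t0 + real k * T0 \<ge> t0" using T0(1) by simp
        have "infdist (cocycle f \<Lambda> r (t0 + real k * T0 + T0) (t0 + real k * T0) q) (A lp)
            \<le> C * exp (- \<mu> * T0) * infdist q (A lp) + \<beta>"
          using stepT[OF t1 q\<eta>, of T0] T0(1) by simp
        also have "\<dots> = infdist q (A lp) / 4 + \<beta>" using T0(2) by simp
        also have "\<dots> \<le> ((\<eta>s/4) / 2^k + 2 * \<beta>) / 4 + \<beta>" using qk by simp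
        also have "\<dots> \<le> (\<eta>s/4) / 2^(Suc k) + 2 * \<beta>"
        proof -
          have a0: "(\<eta>s/4) / 2^k \<ge> 0" using \<eta>s by simp
          have eq: "(\<eta>s/4) / 2^(Suc k) = ((\<eta>s/4) / 2^k) / 2" by simp
          have gen: "(a + 2 * \<beta>) / 4 + \<beta> \<le> a / 2 + 2 * \<beta>" if "a \<ge> 0" for a
            using that \<beta> b by (simp add: field_simps)
          show ?thesis unfolding eq by (rule gen[OF a0])
        qed
        finally show ?case
          using cocy[OF r0, of "t0 + real (Suc k) * T0" "t0 + real k * T0" t0 w]
          by (simp add: q_def algebra_simps)
      qed
      obtain k0 :: nat where k0: "C * (\<eta>s/4) * 4 / \<epsilon>' < 2 ^ k0" using real_arch_pow[of 2] by auto
      have fin: "infdist (cocycle f \<Lambda> r t t0 w) (A lp) \<le> \<epsilon>'"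
        if w: "infdist w (A lp) \<le> \<eta>s/4" and t: "t \<ge> t0 + real k0 * T0" for w t
      proof -
        have tt0: "t \<ge> t0" using t T0(1) by (smt (verit) of_nat_0_le_iff mult_nonneg_nonneg)
        obtain k :: nat and u where ku: "0 \<le> u" "u < T0" "t = t0 + real k * T0 + u"
          using decomp[OF T0(1) tt0] by blast
        have "real k0 * T0 < (real k + 1) * T0" using t ku by (simp add: algebra_simps)
        then have "real k0 < real k + 1" using T0(1) by (simp add: mult_less_cancel_right)
        then have kk: "k0 \<le> k" by linarith
        define q where "q = cocycle f \<Lambda> r (t0 + real k * T0) t0 w"
        have qk: "infdist q (A lp) \<le> (\<eta>s/4) / 2^k + 2 * \<beta>" using ic[OF w, of k] by (simp add: q_def)
        have "(\<eta>s/4) / 2^k \<le> \<eta>s/4" using \<eta>s by (simp add: divide_le_eq_1 field_simps)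
        then have q\<eta>: "infdist q (A lp) < \<eta>s" using qk \<beta> b \<eta>s by linarith
        have t1: "t0 + real k * T0 \<ge> t0" using T0(1) by simp
        have "infdist (cocycle f \<Lambda> r (t0 + real k * T0 + u) (t0 + real k * T0) q) (A lp)
            \<le> C * exp (- \<mu> * u) * infdist q (A lp) + \<beta>"
          using stepT[OF t1 q\<eta>, of u] ku by simp
        also have "\<dots> \<le> C * 1 * infdist q (A lp) + \<beta>"
          using ku \<mu> C1 by (intro add_right_mono mult_right_mono mult_left_mono) (auto simp: infdist_nonneg)
        also have "\<dots> \<le> C * ((\<eta>s/4) / 2^k + 2 * \<beta>) + \<beta>" using qk C1 by simp
        also have "\<dots> \<le> \<epsilon>'"
        proof -
          have "(2::real) ^ k0 \<le> 2 ^ k" using kk by (simp add: power_increasing)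
          then have "C * (\<eta>s/4) * 4 / \<epsilon>' < 2 ^ k" using k0 by linarith
          then have "C * (\<eta>s/4) * 4 < \<epsilon>' * 2 ^ k" using \<epsilon>' by (simp add: divide_less_eq mult.commute)
          then have a1: "C * ((\<eta>s/4) / 2^k) \<le> \<epsilon>' / 4" by (simp add: field_simps)
          have a2: "C * (2 * \<beta>) \<le> \<epsilon>' / 4"
          proof -
            have "C * (2 * \<beta>) = C * b" using \<beta> by simp
            also have "\<dots> \<le> C * (\<epsilon>' / (4 * C))" using b C1 by (intro mult_left_mono) auto
            also have "\<dots> = \<epsilon>' / 4" using C1 by simp
            finally show ?thesis .
          qed
          have a3: "\<beta> \<le> \<epsilon>' / 4"
          proof -
            have "\<epsilon>' * 1 \<le> \<epsilon>' * C" using C1 \<epsilon>' by (intro mult_left_mono) auto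
            then have "\<epsilon>' / C \<le> \<epsilon>'" using C1 by (simp add: divide_le_eq)
            then have "\<epsilon>' / (4 * C) \<le> \<epsilon>' / 4" by simp
            then show ?thesis using \<beta> b by linarith
          qed
          show ?thesis using a1 a2 a3 \<epsilon>' by (simp add: distrib_left)
        qed
        finally show ?thesis
          using cocy[OF r0, of t "t0 + real k * T0" t0 w] ku by (simp add: q_def)
      qed
      show ?thesis
      proof (intro exI[of _ "max 1 (t0 + real k0 * T0)"] conjI allI impI)
        show "max 1 (t0 + real k0 * T0) > 0" by simp
        fix t assume t: "max 1 (t0 + real k0 * T0) \<le> t"
        show "pullback_fibre f \<Lambda> r (A lm) t \<subseteq> {z. infdist z (A lp) \<le> \<epsilon>'}"
          unfolding fibre_eq[OF r0 \<eta>(1,2)]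
        proof (rule pb_sub[OF closed_sub, of "max 1 (- S0)"])
          show "max 1 (- S0) > 0" by simp
          fix s x assume s: "s \<le> - max 1 (- S0)" and x: "x \<in> nbhd \<eta> (A lm)"
          have sS: "s \<le> S0" "s \<le> t0" using s t0 by auto
          have "infdist x (A lm) < \<rho>/2" using x \<eta> by (simp add: nbhd_def)
          then have "infdist x (A (\<Lambda> (r * s))) \<le> \<rho>" using S0 sS by blast
          then have w1: "infdist (cocycle f \<Lambda> r t0 s x) (A (\<Lambda> (r * t0))) \<le> \<eta>s / 8"
            using traj[OF g _ sS(2)] C\<rho> by simp
          have "\<bar>\<Lambda> (r * t0) - lp\<bar> < d1" using St2 t0 by blast
          then have h: "\<forall>a\<in>A (\<Lambda> (r * t0)). infdist a (A lp) \<le> \<eta>s/16" using d1(2) Lam_I by (meson less_imp_le)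
          have "infdist (cocycle f \<Lambda> r t0 s x) (A lp)
              \<le> infdist (cocycle f \<Lambda> r t0 s x) (A (\<Lambda> (r * t0))) + \<eta>s/16"
            by (rule switch[OF A_compact[OF Lam_I] A_ne[OF Lam_I] h])
          then have w: "infdist (cocycle f \<Lambda> r t0 s x) (A lp) \<le> \<eta>s/4" using w1 \<eta>s by linarith
          have "infdist (cocycle f \<Lambda> r t t0 (cocycle f \<Lambda> r t0 s x)) (A lp) \<le> \<epsilon>'"
            using fin[OF w] t by simp
          then show "cocycle f \<Lambda> r t s x \<in> {z. infdist z (A lp) \<le> \<epsilon>'}"
            using cocy[OF r0, of t t0 s x] by simp
        qed
      qed
    qed
    show "pullback_limit_set f \<Lambda> r (A lm) \<subseteq> A lp"
    proof
      fix y assume y: "y \<in> pullback_limit_set f \<Lambda> r (A lm)"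
      have le: "infdist y (A lp) \<le> \<epsilon>'" if \<epsilon>': "\<epsilon>' > 0" for \<epsilon>'
      proof -
        obtain \<tau>1 where \<tau>1: "\<tau>1 > 0" "\<forall>t\<ge>\<tau>1. pullback_fibre f \<Lambda> r (A lm) t \<subseteq> {z. infdist z (A lp) \<le> \<epsilon>'}"
          using kc[OF \<epsilon>'] by blast
        have "y \<in> closure (\<Union>t\<in>{\<tau>1..}. pullback_fibre f \<Lambda> r (A lm) t)"
          using y \<tau>1(1) unfolding pullback_limit_set_def by blast
        also have "\<dots> \<subseteq> {z. infdist z (A lp) \<le> \<epsilon>'}"
          using \<tau>1(2) by (intro closure_minimal closed_sub) auto
        finally show ?thesis by simp
      qed
      have "infdist y (A lp) = 0"
      proof (rule ccontr)
        assume "infdist y (A lp) \<noteq> 0"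
        then have "infdist y (A lp) > 0" using infdist_nonneg[of y "A lp"] by linarith
        then show False using le[of "infdist y (A lp) / 2"] by simp
      qed
      then show "y \<in> A lp" using in_closed_iff_infdist_zero[OF A_closed[OF lpI] A_ne[OF lpI]] by simp
    qed
  qed
qed

end

theorem theorem3p1:
  fixes f :: "'a::euclidean_space \<Rightarrow> real \<Rightarrow> 'a"
    and \<Lambda> :: "real \<Rightarrow> real" and lm lp :: real and A :: "real \<Rightarrow> 'a set"
  assumes "C1_map f"
    and "lm < lp"
    and "parameter_shift \<Lambda> lm lp"
    and "\<forall>r>0. \<forall>s x0. \<exists>x. is_solution (\<lambda>t x. f x (\<Lambda> (r * t))) x \<and> x s = x0"
    and "\<forall>l\<in>{lm..lp}. \<forall>x0. \<exists>x. is_solution (\<lambda>t x. f x l) x \<and> x 0 = x0"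
    and "uniformly_stable_branch f lm lp A"
  shows "(\<forall>\<epsilon>>0. \<exists>\<delta>>0. \<forall>r t. 0 < r \<and> r < \<delta> \<longrightarrow>
            semidist (pullback_fibre f \<Lambda> r (A lm) t) (A (\<Lambda> (r * t))) < \<epsilon>)
       \<and> (\<exists>\<delta>>0. \<forall>r. 0 < r \<and> r < \<delta> \<longrightarrow> pullback_limit_set f \<Lambda> r (A lm) \<subseteq> A lp)"
proof -
  obtain \<mu> \<eta>s C where us: "\<forall>l\<in>{lm..lp}. exp_stable_attractor_with (flow_of f l) (A l) \<mu> \<eta>s C"
    using assms(6) unfolding uniformly_stable_branch_def by blast
  have br: "branch_of_attractors f lm lp A"
    using assms(6) unfolding uniformly_stable_branch_def by blast
  interpret c: ctx f \<Lambda> lm lp A \<mu> \<eta>s C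
    by unfold_locales (use assms br us in auto)
  show ?thesis using c.part1 c.part2 by blast
qed

end
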